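(* Let $G_0$ be the group defined in the context. The commutator subgroup $G_0'$ consists exactly of those elements $g\in G_0$ that satisfy both of the following: - $g$, as a homeomorphism of $\mathbb{R}$, has compact support; - $g$ is represented by a word over the generating set $\{x_{\mathtt s}:\mathtt s\in 2^{<\mathbb{N}}\}\cup\{y_{\mathtt s}:\mathtt s \text{ non-constant}\}$ in which the total exponent of the $y$-generators is zero.
   Context: Let $2^{\mathbb{N}}$ be the set of infinite binary sequences and $2^{<\mathbb{N}}$ the set of finite ones. Define maps of $2^{\mathbb{N}}$ as follows. - $x$ is given by $x(\mathtt{00}\xi)=\mathtt{0}\xi$, $x(\mathtt{01}\xi)=\mathtt{10}\xi$, $x(\mathtt{1}\xi)=\mathtt{11}\xi$. - $y$ and $y^{-1}$ are defined recursively by $y(\mathtt{00}\xi)=\mathtt{0}y(\xi)$, $y(\mathtt{01}\xi)=\mathtt{10}y^{-1}(\xi)$, $y(\mathtt{1}\xi)=\mathtt{11}y(\xi)$, and $y^{-1}(\mathtt{0}\xi)=\mathtt{00}y^{-1}(\xi)$, $y^{-1}(\mathtt{10}\xi)=\mathtt{01}y(\xi)$, $y^{-1}(\mathtt{11}\xi)=\mathtt{1}y^{-1}(\xi)$. - For a finite sequence $\mathtt s$, $x_{\mathtt s}(\mathtt s\xi)=\mathtt s x(\xi)$, and $x_{\mathtt s}$ is the identity on sequences not beginning with $\mathtt s$. The map $y_{\mathtt s}$ is defined similarly. A finite sequence is constant if it is of the form $\mathtt0^n$ or $\mathtt1^n$. Define $\varphi(\mathtt0\xi)=1/(1+1/\varphi(\xi))$,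 $\varphi(\mathtt1\xi)=1+\varphi(\xi)$, $\Phi(\mathtt0\xi)=-\varphi(\tilde\xi)$ and $\Phi(\mathtt1\xi)=\varphi(\xi)$, where $\tilde\xi$ swaps $\mathtt0,\mathtt1$. Via $\Phi:2^{\mathbb N}\to\mathbb{R}$ these maps induce homeomorphisms of $\mathbb{R}$. Under this identification, $x,x_{\mathtt1},y_{\mathtt{10}}$ are the maps $a(t)=t+1$, $b$ and $c$, where - $b(t)=t$ for $t\le0$, $t/(1-t)$ on $[0,1/2]$, $(3t-1)/t$ on $[1/2,1]$, and $t+1$ for $t\ge1$; - $c(t)=2t/(t+1)$ on $[0,1]$ and $t$ otherwise. $G_0$ is the group generated by all $x_{\mathtt s}$ and all $y_{\mathtt s}$ with $\mathtt s$ non-constant; it equals the group generated by $a,b,c$. *)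

theory Defs
  imports "HOL-Analysis.Analysis" "HOL-Algebra.Bij" "HOL-Algebra.Generated_Groups"
begin

text \<open>Infinite binary sequences (2^N) are modelled as nat => bool (False = 0, True = 1);
finite binary sequences as bool list.\<close>

type_synonym seq = "nat \<Rightarrow> bool"

definition prepend :: "bool list \<Rightarrow> seq \<Rightarrow> seq" where
  "prepend s \<xi> = (\<lambda>n. if n < length s then s ! n else \<xi> (n - length s))"

definition sdrop :: "nat \<Rightarrow> seq \<Rightarrow> seq" where
  "sdrop k \<xi> = (\<lambda>n. \<xi> (n + k))"

definition has_prefix :: "bool list \<Rightarrow> seq \<Rightarrow> bool" where
  "has_prefix s \<xi> \<longleftrightarrow> (\<forall>i < length s. \<xi> i = s ! i)"

definition xmap :: "seq \<Rightarrow> seq" where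
  "xmap \<xi> = (if \<not> \<xi> 0 \<and> \<not> \<xi> 1 then prepend [False] (sdrop 2 \<xi>)
             else if \<not> \<xi> 0 then prepend [True, False] (sdrop 2 \<xi>)
             else prepend [True, True] (sdrop 1 \<xi>))"

text \<open>The recursive definitions of y (mode True) and y^-1 (mode False), as a transducer
on finite words: complete input blocks are consumed, an incomplete tail produces nothing.\<close>
fun ytr :: "bool \<Rightarrow> bool list \<Rightarrow> bool list" where
  "ytr True (False # False # r) = False # ytr True r"
| "ytr True (False # True # r) = True # False # ytr False r"
| "ytr True (True # r) = True # True # ytr True r"
| "ytr False (False # r) = False # False # ytr False r"
| "ytr False (True # False # r) = False # True # ytr True r"
| "ytr False (True # True # r) = True # ytr False r"
| "ytr _ _ = []"

text \<open>The n-th output symbol is determined by the input prefix of length 2n+3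
(which always yields at least n+1 output symbols).\<close>
definition ymode :: "bool \<Rightarrow> seq \<Rightarrow> seq" where
  "ymode m \<xi> = (\<lambda>n. ytr m (map \<xi> [0..<2*n+3]) ! n)"

definition ymap :: "seq \<Rightarrow> seq" where "ymap = ymode True"
definition yinvmap :: "seq \<Rightarrow> seq" where "yinvmap = ymode False"

definition loc :: "bool list \<Rightarrow> (seq \<Rightarrow> seq) \<Rightarrow> seq \<Rightarrow> seq" where
  "loc s f \<xi> = (if has_prefix s \<xi> then prepend s (f (sdrop (length s) \<xi>)) else \<xi>)"

definition x_s :: "bool list \<Rightarrow> seq \<Rightarrow> seq" where "x_s s = loc s xmap"
definition y_s :: "bool list \<Rightarrow> seq \<Rightarrow> seq" where "y_s s = loc s ymap"

definition constant_word :: "bool list \<Rightarrow> bool" where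
  "constant_word s \<longleftrightarrow> (\<exists>n. s = replicate n False \<or> s = replicate n True)"

abbreviation Sym :: "(seq \<Rightarrow> seq) monoid" where "Sym \<equiv> BijGroup UNIV"

definition gens :: "(seq \<Rightarrow> seq) set" where
  "gens = {x_s s | s. True} \<union> {y_s s | s. \<not> constant_word s}"

definition G0 :: "(seq \<Rightarrow> seq) set" where
  "G0 = generate Sym gens"

definition G0' :: "(seq \<Rightarrow> seq) set" where
  "G0' = derived Sym G0"

text \<open>Words over the generators: letters are (generator, exponent sign), sign True = +1.\<close>
datatype letter = LX "bool list" | LY "bool list"

fun letter_map :: "letter \<Rightarrow> seq \<Rightarrow> seq" where
  "letter_map (LX s) = x_s s"
| "letter_map (LY s) = y_s s"

definition valid_word :: "(letter \<times> bool) list \<Rightarrow> bool" where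
  "valid_word w \<longleftrightarrow> (\<forall>(l, e) \<in> set w. case l of LX s \<Rightarrow> True | LY s \<Rightarrow> \<not> constant_word s)"

fun word_eval :: "(letter \<times> bool) list \<Rightarrow> seq \<Rightarrow> seq" where
  "word_eval [] = \<one>\<^bsub>Sym\<^esub>"
| "word_eval ((l, e) # w) =
     (if e then letter_map l else inv\<^bsub>Sym\<^esub> (letter_map l)) \<otimes>\<^bsub>Sym\<^esub> word_eval w"

fun y_exponent :: "(letter \<times> bool) list \<Rightarrow> int" where
  "y_exponent [] = 0"
| "y_exponent ((LX s, e) # w) = y_exponent w"
| "y_exponent ((LY s, e) # w) = (if e then 1 else -1) + y_exponent w"

text \<open>The identification Phi : 2^N -> [-inf, inf].  phi is the limit of the finite
stages of its recursion phi(0 xi) = 1/(1+1/phi(xi)), phi(1 xi) = 1 + phi(xi).\<close>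
fun phi_stage :: "nat \<Rightarrow> seq \<Rightarrow> real" where
  "phi_stage 0 \<xi> = 1"
| "phi_stage (Suc n) \<xi> =
     (if \<xi> 0 then 1 + phi_stage n (sdrop 1 \<xi>) else 1 / (1 + 1 / phi_stage n (sdrop 1 \<xi>)))"

definition phi :: "seq \<Rightarrow> ereal" where
  "phi \<xi> = lim (\<lambda>n. ereal (phi_stage n \<xi>))"

definition Phi :: "seq \<Rightarrow> ereal" where
  "Phi \<xi> = (if \<xi> 0 then phi (sdrop 1 \<xi>) else - phi (\<lambda>n. \<not> \<xi> (n + 1)))"

definition compact_support :: "(seq \<Rightarrow> seq) \<Rightarrow> bool" where
  "compact_support g \<longleftrightarrow>
     (\<exists>K :: real set. compact K \<and>
        (\<forall>\<xi> t. Phi \<xi> = ereal t \<longrightarrow> t \<notin> K \<longrightarrow> Phi (g \<xi>) = Phi \<xi>))"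

end

theory Submission
  imports Defs
begin


abbreviation finv :: "('a \<Rightarrow> 'b) \<Rightarrow> 'b \<Rightarrow> 'a" where "finv f \<equiv> inv_into UNIV f"

lemma prepend_nil[simp]: "prepend [] \<xi> = \<xi>"
  by (simp add: prepend_def)

lemma prepend_append: "prepend (u @ v) \<xi> = prepend u (prepend v \<xi>)"
  by (rule ext) (auto simp: prepend_def nth_append)

lemma prepend_Cons: "prepend (a # v) \<xi> = prepend [a] (prepend v \<xi>)"
  using prepend_append[of "[a]" v] by simp

lemma sdrop_prepend[simp]: "sdrop (length u) (prepend u \<xi>) = \<xi>"
  by (rule ext) (simp add: prepend_def sdrop_def)

lemma sdrop_prepend1[simp]: "sdrop (Suc 0) (prepend [a] \<xi>) = \<xi>"
  using sdrop_prepend[of "[a]"] by simp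

lemma sdrop_prepend2[simp]: "sdrop 2 (prepend [a,b] \<xi>) = \<xi>"
  using sdrop_prepend[of "[a,b]"] by (simp add: numeral_2_eq_2)

lemma prepend_nth0[simp]: "prepend (a # v) \<xi> 0 = a"
  by (simp add: prepend_def)

lemma prepend_nthSuc[simp]: "prepend (a # v) \<xi> (Suc n) = prepend v \<xi> n"
  by (simp add: prepend_def)

lemma prepend_nth1[simp]: "prepend (a # v) \<xi> 1 = prepend v \<xi> 0"
  by (simp add: prepend_def)

lemma sdrop_sdrop: "sdrop a (sdrop b \<xi>) = sdrop (a + b) \<xi>"
  by (rule ext) (simp add: sdrop_def add.assoc)

lemma seq_decomp: "\<xi> = prepend (map \<xi> [0..<k]) (sdrop k \<xi>)"
  by (rule ext) (simp add: prepend_def sdrop_def)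

lemma seq_decomp1: "\<xi> = prepend [\<xi> 0] (sdrop 1 \<xi>)"
  using seq_decomp[of \<xi> 1] by simp

lemma seq_decomp2: "\<xi> = prepend [\<xi> 0, \<xi> 1] (sdrop 2 \<xi>)"
  using seq_decomp[of \<xi> 2] by (simp add: numeral_2_eq_2)

lemma prepend_inj: "length u = length v \<Longrightarrow> prepend u \<xi> = prepend v \<eta> \<longleftrightarrow> u = v \<and> \<xi> = \<eta>"
proof
  assume l: "length u = length v" and e: "prepend u \<xi> = prepend v \<eta>"
  have "u = v"
  proof (rule nth_equalityI)
    fix i assume "i < length u"
    then show "u ! i = v ! i" using fun_cong[OF e, of i] l by (simp add: prepend_def)
  qed (simp add: l)
  moreover have "\<xi> = \<eta>" by (metis e l sdrop_prepend)
  ultimately show "u = v \<and> \<xi> = \<eta>" by simp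
qed simp

lemma has_prefix_iff: "has_prefix s \<xi> \<longleftrightarrow> (\<exists>\<eta>. \<xi> = prepend s \<eta>)"
proof
  assume h: "has_prefix s \<xi>"
  have "\<xi> = prepend s (sdrop (length s) \<xi>)"
    using h by (auto simp: prepend_def sdrop_def has_prefix_def intro!: ext)
  then show "\<exists>\<eta>. \<xi> = prepend s \<eta>" by blast
qed (auto simp: has_prefix_def prepend_def)

lemma has_prefix_prepend[simp]: "has_prefix s (prepend s \<eta>)"
  using has_prefix_iff by blast

lemma has_prefix_prepend_append[simp]: "has_prefix s (prepend (s @ w) \<eta>)"
  by (simp add: prepend_append)

section \<open>Localisation\<close>

lemma loc_prepend[simp]: "loc s f (prepend s \<eta>) = prepend s (f \<eta>)"
  by (simp add: loc_def)

lemma loc_prepend_append: "loc s f (prepend (s @ w) \<eta>) = prepend s (f (prepend w \<eta>))"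
  by (simp add: prepend_append)

lemma loc_nopre: "\<not> has_prefix s \<xi> \<Longrightarrow> loc s f \<xi> = \<xi>"
  by (simp add: loc_def)

lemma has_prefix_loc: "has_prefix s (loc s f \<xi>) \<longleftrightarrow> has_prefix s \<xi>"
  by (auto simp: loc_def)

lemma loc_comp: "loc s f \<circ> loc s g = loc s (f \<circ> g)"
proof (rule ext)
  fix \<xi> show "(loc s f \<circ> loc s g) \<xi> = loc s (f \<circ> g) \<xi>"
  proof (cases "has_prefix s \<xi>")
    case True then obtain \<eta> where "\<xi> = prepend s \<eta>" using has_prefix_iff by blast
    then show ?thesis by simp
  next
    case False then show ?thesis by (simp add: loc_nopre)
  qed
qed

lemma loc_id: "loc s id = id"
  by (rule ext) (auto simp: loc_def has_prefix_iff)

lemma loc_loc: "loc s (loc t f) = loc (s @ t) f"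
proof (rule ext)
  fix \<xi> show "loc s (loc t f) \<xi> = loc (s @ t) f \<xi>"
  proof (cases "has_prefix s \<xi>")
    case True then obtain \<eta> where e: "\<xi> = prepend s \<eta>" using has_prefix_iff by blast
    show ?thesis
    proof (cases "has_prefix t \<eta>")
      case True then obtain \<zeta> where "\<eta> = prepend t \<zeta>" using has_prefix_iff by blast
      then have "loc s (loc t f) \<xi> = prepend s (prepend t (f \<zeta>))" using e by simp
      also have "\<dots> = loc (s @ t) f \<xi>" using e \<open>\<eta> = _\<close> by (metis loc_prepend prepend_append)
      finally show ?thesis .
    next
      case False
      have "\<not> has_prefix (s @ t) \<xi>"
      proof
        assume "has_prefix (s @ t) \<xi>"
        then obtain \<zeta> where "\<xi> = prepend (s @ t) \<zeta>" using has_prefix_iff by blast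
        then have "\<eta> = prepend t \<zeta>" using e prepend_inj[of s s] by (simp add: prepend_append)
        then show False using False by simp
      qed
      then show ?thesis using e False by (simp add: loc_nopre)
    qed
  next
    case False
    have "\<not> has_prefix (s @ t) \<xi>"
      using False by (auto simp: has_prefix_iff prepend_append)
    then show ?thesis using False by (simp add: loc_nopre)
  qed
qed

lemma bij_comp_finv: "bij f \<Longrightarrow> f \<circ> finv f = id"
  by (metis bij_is_surj surj_iff)
lemma bij_finv_comp: "bij f \<Longrightarrow> finv f \<circ> f = id"
  by (metis bij_is_inj inj_iff)

lemma bij_loc: assumes "bij f" shows "bij (loc s f)"
proof -
  have "loc s f \<circ> loc s (finv f) = id" "loc s (finv f) \<circ> loc s f = id"
    using assms by (simp_all add: loc_comp bij_comp_finv bij_finv_comp loc_id)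
  then show ?thesis using bij_betw_byWitness[of UNIV "loc s (finv f)" "loc s f" UNIV]
    by (metis bij_def comp_eq_id_dest o_bij)
qed

lemma inv_loc: assumes "bij f" shows "finv (loc s f) = loc s (finv f)"
proof -
  have "loc s f \<circ> loc s (finv f) = id"
    using assms by (simp add: loc_comp bij_comp_finv loc_id)
  moreover have "loc s (finv f) \<circ> loc s f = id"
    using assms by (simp add: loc_comp bij_finv_comp loc_id)
  ultimately show ?thesis by (metis inv_unique_comp)
qed

lemma conj_loc:
  assumes hb: "bij h" and hp: "\<And>\<eta>. h (prepend p \<eta>) = prepend q \<eta>"
  shows "h \<circ> loc p f \<circ> finv h = loc q f"
proof (rule ext)
  fix \<xi>
  show "(h \<circ> loc p f \<circ> finv h) \<xi> = loc q f \<xi>"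
  proof (cases "has_prefix q \<xi>")
    case True then obtain \<eta> where e: "\<xi> = prepend q \<eta>" using has_prefix_iff by blast
    have "finv h \<xi> = prepend p \<eta>" using e hp hb by (metis bij_inv_eq_iff)
    then show ?thesis using e hp by simp
  next
    case False
    have "\<not> has_prefix p (finv h \<xi>)"
    proof
      assume "has_prefix p (finv h \<xi>)"
      then obtain \<eta> where "finv h \<xi> = prepend p \<eta>" using has_prefix_iff by blast
      then have "\<xi> = prepend q \<eta>" using hp hb by (metis bij_inv_eq_iff)
      then show False using False by simp
    qed
    then show ?thesis using False hb by (simp add: loc_nopre bij_is_surj surj_f_inv_f)
  qed
qed



lemma sdrop_Cons1[simp]: "sdrop (Suc 0) (prepend (a # w) \<eta>) = prepend w \<eta>"
  by (rule ext) (simp add: sdrop_def prepend_def)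
lemma sdrop_Cons2[simp]: "sdrop 2 (prepend (a # b # w) \<eta>) = prepend w \<eta>"
  by (rule ext) (simp add: sdrop_def prepend_def)
lemma prepend_single[simp]: "prepend [a] (prepend w \<eta>) = prepend (a # w) \<eta>"
  by (metis prepend_Cons)
lemma prepend_pair[simp]: "prepend [a, b] (prepend w \<eta>) = prepend (a # b # w) \<eta>"
  by (metis prepend_append append_Cons append_Nil)

lemma xmap_00: "xmap (prepend (False # False # w) \<eta>) = prepend (False # w) \<eta>"
  by (simp add: xmap_def)

lemma xmap_01: "xmap (prepend (False # True # w) \<eta>) = prepend (True # False # w) \<eta>"
  by (simp add: xmap_def)

lemma xmap_1: "xmap (prepend (True # w) \<eta>) = prepend (True # True # w) \<eta>"
  by (simp add: xmap_def)

definition xinv :: "seq \<Rightarrow> seq" where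
  "xinv \<xi> = (if \<not> \<xi> 0 then prepend [False, False] (sdrop 1 \<xi>)
             else if \<not> \<xi> 1 then prepend [False, True] (sdrop 2 \<xi>)
             else prepend [True] (sdrop 2 \<xi>))"

lemma xinv_0: "xinv (prepend (False # w) \<eta>) = prepend (False # False # w) \<eta>"
  by (simp add: xinv_def)

lemma xinv_10: "xinv (prepend (True # False # w) \<eta>) = prepend (False # True # w) \<eta>"
  by (simp add: xinv_def)

lemma xinv_11: "xinv (prepend (True # True # w) \<eta>) = prepend (True # w) \<eta>"
  by (simp add: xinv_def)

lemma seq_cases2:
  obtains (c00) \<eta> where "\<xi> = prepend [False, False] \<eta>"
  | (c01) \<eta> where "\<xi> = prepend [False, True] \<eta>"
  | (c10) \<eta> where "\<xi> = prepend [True, False] \<eta>"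
  | (c11) \<eta> where "\<xi> = prepend [True, True] \<eta>"
  using seq_decomp2[of \<xi>] by (cases "\<xi> 0"; cases "\<xi> 1") auto

lemma xinv_xmap: "xinv (xmap \<xi>) = \<xi>"
  by (cases \<xi> rule: seq_cases2)
     (simp_all only: xmap_00 xmap_01 xmap_1[of "[_]", simplified] xinv_0 xinv_10 xinv_11)

lemma xmap_xinv: "xmap (xinv \<xi>) = \<xi>"
  by (cases \<xi> rule: seq_cases2)
     (simp_all only: xmap_00 xmap_01 xmap_1 xinv_0[of "[_]", simplified] xinv_10 xinv_11)

lemma bij_xmap: "bij xmap"
  by (rule bij_betw_byWitness[of UNIV xinv]) (auto simp: xinv_xmap xmap_xinv)

lemma finv_xmap: "finv xmap = xinv"
  by (metis bij_xmap bij_inv_eq_iff xmap_xinv ext)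

lemma ytr_len: "length xs \<le> 2 * length (ytr m xs) + 1"
  by (induction m xs rule: ytr.induct) auto

lemma ytr_append: "\<exists>zs. ytr m (xs @ ys) = ytr m xs @ zs"
  by (induction m xs rule: ytr.induct) auto

lemma ytr_nth_append: "n < length (ytr m xs) \<Longrightarrow> ytr m (xs @ ys) ! n = ytr m xs ! n"
  using ytr_append[of m xs ys] by (auto simp: nth_append)

lemma ymode_eq: assumes "2 * n + 3 \<le> k" shows "ytr m (map \<xi> [0..<k]) ! n = ymode m \<xi> n"
proof -
  have "[0..<k] = [0..<2*n+3] @ [2*n+3..<k]"
    using upt_add_eq_append[of 0 "2*n+3" "k-(2*n+3)"] assms by simp
  then have "map \<xi> [0..<k] = map \<xi> [0..<2*n+3] @ map \<xi> [2*n+3..<k]" by simp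
  moreover have "n < length (ytr m (map \<xi> [0..<2*n+3]))"
    using ytr_len[of "map \<xi> [0..<2*n+3]" m] by simp
  ultimately show ?thesis by (simp add: ymode_def ytr_nth_append)
qed

lemma map_prepend_upt: "length p \<le> k \<Longrightarrow> map (prepend p \<eta>) [0..<k] = p @ map \<eta> [0..<k - length p]"
proof (induction p arbitrary: k)
  case Nil then show ?case by simp
next
  case (Cons a p)
  then obtain k' where k: "k = Suc k'" by (cases k) auto
  have "map (prepend (a # p) \<eta>) [0..<Suc k'] = a # map (\<lambda>i. prepend (a # p) \<eta> (Suc i)) [0..<k']"
    by (simp add: map_upt_Suc del: upt_Suc)
  also have "\<dots> = a # map (prepend p \<eta>) [0..<k']" by simp
  finally show ?case using Cons k by simp
qed

lemma ymode_step:
  assumes tr: "\<And>r. ytr m (p @ r) = q @ ytr m' r" and lp: "length p \<le> 2 * length q" "length p \<le> 3"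
  shows "ymode m (prepend p \<eta>) = prepend q (ymode m' \<eta>)"
proof (rule ext)
  fix n
  have "ymode m (prepend p \<eta>) n = ytr m (p @ map \<eta> [0..<2*n+3 - length p]) ! n"
    using lp by (simp add: ymode_def map_prepend_upt)
  also have "\<dots> = (q @ ytr m' (map \<eta> [0..<2*n+3 - length p])) ! n" by (simp add: tr)
  also have "\<dots> = prepend q (ymode m' \<eta>) n"
  proof (cases "n < length q")
    case True then show ?thesis by (simp add: nth_append prepend_def)
  next
    case False
    have "2 * (n - length q) + 3 \<le> 2*n+3 - length p" using False lp by simp
    then show ?thesis using False by (simp add: nth_append prepend_def ymode_eq)
  qed
  finally show "ymode m (prepend p \<eta>) n = prepend q (ymode m' \<eta>) n" .
qed

lemma ym_00: "ymode True (prepend (False # False # w) \<eta>) = prepend [False] (ymode True (prepend w \<eta>))"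
  using ymode_step[of True "[False, False]" "[False]" True "prepend w \<eta>"] by simp
lemma ym_01: "ymode True (prepend (False # True # w) \<eta>) = prepend [True, False] (ymode False (prepend w \<eta>))"
  using ymode_step[of True "[False, True]" "[True, False]" False "prepend w \<eta>"] by simp
lemma ym_1: "ymode True (prepend (True # w) \<eta>) = prepend [True, True] (ymode True (prepend w \<eta>))"
  using ymode_step[of True "[True]" "[True, True]" True "prepend w \<eta>"] by simp
lemma yi_0: "ymode False (prepend (False # w) \<eta>) = prepend [False, False] (ymode False (prepend w \<eta>))"
  using ymode_step[of False "[False]" "[False, False]" False "prepend w \<eta>"] by simp
lemma yi_10: "ymode False (prepend (True # False # w) \<eta>) = prepend [False, True] (ymode True (prepend w \<eta>))"
  using ymode_step[of False "[True, False]" "[False, True]" True "prepend w \<eta>"] by simp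
lemma yi_11: "ymode False (prepend (True # True # w) \<eta>) = prepend [True] (ymode False (prepend w \<eta>))"
  using ymode_step[of False "[True, True]" "[True]" False "prepend w \<eta>"] by simp

lemma prepend_eq_pt:
  assumes "length q \<le> n \<Longrightarrow> \<zeta> (n - length q) = \<zeta>' (n - length q)"
  shows "prepend q \<zeta> n = prepend q \<zeta>' n"
  using assms by (auto simp: prepend_def)

lemma ymode_inv_aux:
  "ymode False (ymode True \<xi>) n = \<xi> n \<and> ymode True (ymode False \<xi>) n = \<xi> n"
proof (induction n arbitrary: \<xi> rule: less_induct)
  case (less n)
  have A: "ymode False (ymode True \<xi>) n = \<xi> n"
  proof (cases \<xi> rule: seq_cases2)
    case (c00 \<eta>)
    have "ymode False (ymode True \<xi>) n = prepend [False, False] (ymode False (ymode True \<eta>)) n"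
      using c00 ym_00[of "[]"] yi_0[of "[]"] by simp
    also have "\<dots> = prepend [False, False] \<eta> n"
      by (rule prepend_eq_pt) (use less[of "n - Suc (Suc 0)"] in simp)
    finally show ?thesis using c00 by simp
  next
    case (c01 \<eta>)
    have "ymode False (ymode True \<xi>) n = prepend [False, True] (ymode True (ymode False \<eta>)) n"
      using c01 ym_01[of "[]"] yi_10[of "[]"] by simp
    also have "\<dots> = prepend [False, True] \<eta> n"
      by (rule prepend_eq_pt) (use less[of "n - Suc (Suc 0)"] in simp)
    finally show ?thesis using c01 by simp
  next
    case (c10 \<eta>)
    have "ymode False (ymode True \<xi>) n = prepend [True] (ymode False (ymode True (prepend [False] \<eta>))) n"
      using c10 ym_1[of "[False]"] yi_11[of "[]"] by simp
    also have "\<dots> = prepend [True] (prepend [False] \<eta>) n"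
      by (rule prepend_eq_pt) (use less[of "n - Suc 0"] in simp)
    finally show ?thesis using c10 by simp
  next
    case (c11 \<eta>)
    have "ymode False (ymode True \<xi>) n = prepend [True] (ymode False (ymode True (prepend [True] \<eta>))) n"
      using c11 ym_1[of "[True]"] yi_11[of "[]"] by simp
    also have "\<dots> = prepend [True] (prepend [True] \<eta>) n"
      by (rule prepend_eq_pt) (use less[of "n - Suc 0"] in simp)
    finally show ?thesis using c11 by simp
  qed
  have B: "ymode True (ymode False \<xi>) n = \<xi> n"
  proof (cases \<xi> rule: seq_cases2)
    case (c00 \<eta>)
    have "ymode True (ymode False \<xi>) n = prepend [False] (ymode True (ymode False (prepend [False] \<eta>))) n"
      using c00 yi_0[of "[False]"] ym_00[of "[]"] by simp
    also have "\<dots> = prepend [False] (prepend [False] \<eta>) n"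
      by (rule prepend_eq_pt) (use less[of "n - Suc 0"] in simp)
    finally show ?thesis using c00 by simp
  next
    case (c01 \<eta>)
    have "ymode True (ymode False \<xi>) n = prepend [False] (ymode True (ymode False (prepend [True] \<eta>))) n"
      using c01 yi_0[of "[True]"] ym_00[of "[]"] by simp
    also have "\<dots> = prepend [False] (prepend [True] \<eta>) n"
      by (rule prepend_eq_pt) (use less[of "n - Suc 0"] in simp)
    finally show ?thesis using c01 by simp
  next
    case (c10 \<eta>)
    have "ymode True (ymode False \<xi>) n = prepend [True, False] (ymode False (ymode True \<eta>)) n"
      using c10 yi_10[of "[]"] ym_01[of "[]"] by simp
    also have "\<dots> = prepend [True, False] \<eta> n"
      by (rule prepend_eq_pt) (use less[of "n - Suc (Suc 0)"] in simp)
    finally show ?thesis using c10 by simp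
  next
    case (c11 \<eta>)
    have "ymode True (ymode False \<xi>) n = prepend [True, True] (ymode True (ymode False \<eta>)) n"
      using c11 yi_11[of "[]"] ym_1[of "[]"] by simp
    also have "\<dots> = prepend [True, True] \<eta> n"
      by (rule prepend_eq_pt) (use less[of "n - Suc (Suc 0)"] in simp)
    finally show ?thesis using c11 by simp
  qed
  show ?case using A B by simp
qed

lemma bij_ymap: "bij ymap"
  by (rule bij_betw_byWitness[of UNIV yinvmap])
     (auto simp: ymap_def yinvmap_def ymode_inv_aux intro: ext)



lemma grpSym: "group Sym" by (rule group_BijGroup)

lemma Sym_carrier: "carrier Sym = {f. bij f}"
  by (simp add: BijGroup_def Bij_def)

lemma Sym_mult: "bij f \<Longrightarrow> bij g \<Longrightarrow> f \<otimes>\<^bsub>Sym\<^esub> g = f \<circ> g"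
  by (simp add: BijGroup_def Bij_def compose_def fun_eq_iff)

lemma Sym_one: "\<one>\<^bsub>Sym\<^esub> = id"
  by (simp add: BijGroup_def fun_eq_iff)

lemma Sym_inv: "bij f \<Longrightarrow> inv\<^bsub>Sym\<^esub> f = finv f"
  by (simp add: inv_BijGroup Bij_def fun_eq_iff)

lemma bij_finv: "bij f \<Longrightarrow> bij (finv f)"
  by (simp add: bij_imp_bij_inv)

lemma sdrop_0[simp]: "sdrop 0 \<xi> = \<xi>"
  by (simp add: sdrop_def)

lemma loc_Nil[simp]: "loc [] f = f"
  by (simp add: loc_def fun_eq_iff has_prefix_def)

lemma bij_x_s[simp]: "bij (x_s s)"
  by (simp add: x_s_def bij_loc bij_xmap)

lemma bij_y_s[simp]: "bij (y_s s)"
  by (simp add: y_s_def bij_loc bij_ymap)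

lemma gens_carrier: "gens \<subseteq> carrier Sym"
  by (auto simp: gens_def Sym_carrier)

lemma G0_subgroup: "subgroup G0 Sym"
  unfolding G0_def by (rule group.generate_is_subgroup[OF grpSym gens_carrier])

lemma G0_bij: "g \<in> G0 \<Longrightarrow> bij g"
  using subgroup.subset[OF G0_subgroup] Sym_carrier by auto

lemma gens_G0: "gens \<subseteq> G0"
  unfolding G0_def by (auto intro: generate.incl)

lemma x_s_G0[simp]: "x_s s \<in> G0"
  using gens_G0 by (auto simp: gens_def)

lemma y_s_G0: "\<not> constant_word s \<Longrightarrow> y_s s \<in> G0"
  using gens_G0 by (auto simp: gens_def)

lemma G0_comp: "f \<in> G0 \<Longrightarrow> g \<in> G0 \<Longrightarrow> f \<circ> g \<in> G0"
proof -
  assume a: "f \<in> G0" "g \<in> G0"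
  have "f \<otimes>\<^bsub>Sym\<^esub> g \<in> G0" by (rule subgroup.m_closed[OF G0_subgroup a])
  then show ?thesis using a by (simp add: Sym_mult G0_bij)
qed

lemma G0_finv: "f \<in> G0 \<Longrightarrow> finv f \<in> G0"
proof -
  assume a: "f \<in> G0"
  have "inv\<^bsub>Sym\<^esub> f \<in> G0" by (rule subgroup.m_inv_closed[OF G0_subgroup a])
  then show ?thesis using a by (simp add: Sym_inv G0_bij)
qed

definition NN :: "(seq \<Rightarrow> seq) set" where "NN = G0'"

lemma N_sub_G0: "G0' \<subseteq> G0"
  unfolding G0'_def by (rule group.derived_incl[OF grpSym subset_refl G0_subgroup])

abbreviation Gr :: "(seq \<Rightarrow> seq) monoid" where "Gr \<equiv> Sym\<lparr>carrier := G0\<rparr>"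

lemma grpGr: "group Gr"
  by (rule subgroup.subgroup_is_group[OF G0_subgroup grpSym])

lemma N_normal: "G0' \<lhd> Gr"
  unfolding G0'_def by (rule group.derived_subgroup_is_normal[OF grpSym G0_subgroup])

abbreviation Q where "Q \<equiv> Gr Mod G0'"

lemma Q_comm: "comm_group Q"
  unfolding G0'_def by (rule group.derived_quot_of_subgroup_is_comm_group[OF grpSym G0_subgroup])

definition cls :: "(seq \<Rightarrow> seq) \<Rightarrow> (seq \<Rightarrow> seq) set" where "cls g = G0' #>\<^bsub>Gr\<^esub> g"

lemma pi_hom: "cls \<in> hom Gr Q"
  unfolding cls_def using normal.r_coset_hom_Mod[OF N_normal] by simp

lemma Gr_mult: "f \<in> G0 \<Longrightarrow> g \<in> G0 \<Longrightarrow> f \<otimes>\<^bsub>Gr\<^esub> g = f \<circ> g"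
  by (simp add: Sym_mult G0_bij)

lemma Gr_inv: "f \<in> G0 \<Longrightarrow> inv\<^bsub>Gr\<^esub> f = finv f"
proof -
  assume a: "f \<in> G0"
  have "inv\<^bsub>Gr\<^esub> f = inv\<^bsub>Sym\<^esub> f" by (rule group.m_inv_consistent[OF grpSym G0_subgroup a])
  then show ?thesis using a by (simp add: Sym_inv G0_bij)
qed

lemma Gr_one: "\<one>\<^bsub>Gr\<^esub> = id"
  by (simp add: Sym_one)

lemma pi_comp: "f \<in> G0 \<Longrightarrow> g \<in> G0 \<Longrightarrow> cls (f \<circ> g) = cls f \<otimes>\<^bsub>Q\<^esub> cls g"
proof -
  assume a: "f \<in> G0" "g \<in> G0"
  have "cls (f \<otimes>\<^bsub>Gr\<^esub> g) = cls f \<otimes>\<^bsub>Q\<^esub> cls g"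
    by (rule hom_mult[OF pi_hom]) (use a in simp_all)
  then show ?thesis using a by (simp add: Sym_mult G0_bij)
qed

lemma pi_carrier: "f \<in> G0 \<Longrightarrow> cls f \<in> carrier Q"
  using pi_hom by (auto simp: hom_def)

lemma pi_finv: "f \<in> G0 \<Longrightarrow> cls (finv f) = inv\<^bsub>Q\<^esub> cls f"
  using group_hom.hom_inv[of Gr Q cls f] pi_hom grpGr comm_group.axioms(2)[OF Q_comm] Gr_inv
  by (simp add: group_hom_def group_hom_axioms_def)

lemma pi_N: "n \<in> G0' \<Longrightarrow> cls n = \<one>\<^bsub>Q\<^esub>"
  unfolding cls_def using subgroup.rcos_const[OF normal.axioms(1)[OF N_normal] grpGr] by simp

lemma pi_eq_imp: assumes "f \<in> G0" "g \<in> G0" "cls f = cls g" shows "f \<circ> finv g \<in> G0'"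
proof -
  have sg: "subgroup G0' Gr" using normal.axioms(1)[OF N_normal] .
  have "f \<in> G0' #>\<^bsub>Gr\<^esub> g"
  proof -
    have "f \<in> G0' #>\<^bsub>Gr\<^esub> f" by (rule group.rcos_self[OF grpGr _ sg]) (use assms in simp)
    then show ?thesis using assms(3) by (simp add: cls_def)
  qed
  then have "f \<otimes>\<^bsub>Gr\<^esub> inv\<^bsub>Gr\<^esub> g \<in> G0'"
    using subgroup.rcos_module_imp[OF sg grpGr] assms by simp
  then show ?thesis using assms by (simp add: Gr_inv Sym_mult G0_bij bij_finv)
qed

lemma (in comm_group) conj_triv: "x \<in> carrier G \<Longrightarrow> y \<in> carrier G \<Longrightarrow> x \<otimes> y \<otimes> inv x = y"
  by (simp add: m_comm[of x y] m_assoc)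

lemma pi_conj: assumes "h \<in> G0" "g \<in> G0" shows "cls (h \<circ> g \<circ> finv h) = cls g"
proof -
  interpret Q: comm_group Q by (rule Q_comm)
  have "cls (h \<circ> g \<circ> finv h) = cls h \<otimes>\<^bsub>Q\<^esub> cls g \<otimes>\<^bsub>Q\<^esub> inv\<^bsub>Q\<^esub> cls h"
    using assms by (simp add: pi_comp pi_finv G0_comp G0_finv)
  also have "\<dots> = cls g" using assms pi_carrier
    by (intro Q.conj_triv)
  finally show ?thesis .
qed



declare mult_FactGroup[simp del] one_FactGroup[simp del]

lemma constant_word_iff: "constant_word s \<longleftrightarrow> False \<notin> set s \<or> True \<notin> set s"
proof
  assume "constant_word s" then show "False \<notin> set s \<or> True \<notin> set s"
    by (auto simp: constant_word_def)
next
  assume a: "False \<notin> set s \<or> True \<notin> set s"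
  show "constant_word s"
  proof (cases "False \<notin> set s")
    case True
    then have "s = replicate (length s) True"
      by (metis (full_types) replicate_length_same)
    then show ?thesis unfolding constant_word_def by blast
  next
    case False
    then have "True \<notin> set s" using a by simp
    then have "s = replicate (length s) False"
      by (metis (full_types) replicate_length_same)
    then show ?thesis unfolding constant_word_def by blast
  qed
qed

lemma reduce_words:
  fixes P :: "bool list \<Rightarrow> 'q"
  assumes m1: "\<And>t u. \<not> constant_word (t @ False # False # u) \<Longrightarrow> P (t @ False # u) = P (t @ False # False # u)"
    and m2: "\<And>t u. P (t @ True # False # u) = P (t @ False # True # u)"
    and m3: "\<And>t u. \<not> constant_word (t @ True # u) \<Longrightarrow> P (t @ True # True # u) = P (t @ True # u)"
  shows "\<not> constant_word s \<Longrightarrow> P s = P [True, False]"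
proof (induction "length s" arbitrary: s rule: less_induct)
  case less
  note nc = less.prems
  show ?case
  proof (cases s)
    case Nil then show ?thesis using nc by (simp add: constant_word_iff)
  next
    case (Cons a s1)
    show ?thesis
    proof (cases s1)
      case Nil then show ?thesis using nc Cons by (cases a) (simp_all add: constant_word_iff)
    next
      case (Cons b r)
      note s = \<open>s = a # s1\<close>
      show ?thesis
      proof (cases r)
        case Nil
        then show ?thesis using nc s Cons m2[of "[]" "[]"]
          by (cases a; cases b) (simp_all add: constant_word_iff)
      next
        case (Cons c r')
        have ss: "s = a # b # c # r'" using s \<open>s1 = b # r\<close> Cons by simp
        show ?thesis
        proof (cases "a = b")
          case True
          show ?thesis
          proof (cases a)
            case aT: True
            have e: "P s = P (True # c # r')"
              using m3[of "[]" "c # r'"] nc ss True aT by (simp add: constant_word_iff)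
            have "\<not> constant_word (True # c # r')" using nc ss True aT by (auto simp: constant_word_iff)
            then show ?thesis using less.hyps[of "True # c # r'"] e ss by simp
          next
            case aF: False
            have e: "P s = P (False # c # r')"
              using m1[of "[]" "c # r'"] nc ss True aF by (simp add: constant_word_iff)
            have "\<not> constant_word (False # c # r')" using nc ss True aF by (auto simp: constant_word_iff)
            then show ?thesis using less.hyps[of "False # c # r'"] e ss by simp
          qed
        next
          case ab: False
          show ?thesis
          proof (cases "b = c")
            case True
            have e: "P s = P (a # b # r')"
            proof (cases b)
              case True
              then show ?thesis using m3[of "[a]" r'] ss \<open>b = c\<close> ab by (simp add: constant_word_iff)
            next
              case False
              then show ?thesis using m1[of "[a]" r'] ss \<open>b = c\<close> ab by (simp add: constant_word_iff)
            qed
            have "\<not> constant_word (a # b # r')" using ab by (cases a; cases b) (auto simp: constant_word_iff)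
            then show ?thesis using less.hyps[of "a # b # r'"] e ss by simp
          next
            case bc: False
            show ?thesis
            proof (cases a)
              case True
              then have sv: "s = True # False # True # r'" using ss ab bc by (cases b; cases c) auto
              have "P s = P (False # True # True # r')" using m2[of "[]" "True # r'"] sv by simp
              also have "\<dots> = P (False # True # r')" using m3[of "[False]" r'] by (simp add: constant_word_iff)
              finally have e: "P s = P (False # True # r')" .
              have "\<not> constant_word (False # True # r')" by (simp add: constant_word_iff)
              then show ?thesis using less.hyps[of "False # True # r'"] e sv by simp
            next
              case False
              then have sv: "s = False # True # False # r'" using ss ab bc by (cases b; cases c) auto
              have "P s = P (True # False # False # r')" using m2[of "[]" "False # r'"] sv by simp
              also have "\<dots> = P (True # False # r')" using m1[of "[True]" r'] by (simp add: constant_word_iff)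
              finally have e: "P s = P (True # False # r')" .
              have "\<not> constant_word (True # False # r')" by (simp add: constant_word_iff)
              then show ?thesis using less.hyps[of "True # False # r'"] e sv by simp
            qed
          qed
        qed
      qed
    qed
  qed
qed

lemma x_s_00: "x_s t (prepend (t @ False # False # u) \<eta>) = prepend (t @ False # u) \<eta>"
  by (simp add: x_s_def loc_prepend_append xmap_00 prepend_append)
lemma x_s_01: "x_s t (prepend (t @ False # True # u) \<eta>) = prepend (t @ True # False # u) \<eta>"
  by (simp add: x_s_def loc_prepend_append xmap_01 prepend_append)
lemma x_s_1: "x_s t (prepend (t @ True # u) \<eta>) = prepend (t @ True # True # u) \<eta>"
  by (simp add: x_s_def loc_prepend_append xmap_1 prepend_append)

lemma move1: "loc (t @ False # False # u) f \<in> G0 \<Longrightarrow>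
   cls (loc (t @ False # u) f) = cls (loc (t @ False # False # u) f)"
  using conj_loc[of "x_s t" "t @ False # False # u" "t @ False # u" f] x_s_00[of t u]
    pi_conj[of "x_s t" "loc (t @ False # False # u) f"] by simp

lemma move2: "loc (t @ False # True # u) f \<in> G0 \<Longrightarrow>
   cls (loc (t @ True # False # u) f) = cls (loc (t @ False # True # u) f)"
  using conj_loc[of "x_s t" "t @ False # True # u" "t @ True # False # u" f] x_s_01[of t u]
    pi_conj[of "x_s t" "loc (t @ False # True # u) f"] by simp

lemma move3: "loc (t @ True # u) f \<in> G0 \<Longrightarrow>
   cls (loc (t @ True # True # u) f) = cls (loc (t @ True # u) f)"
  using conj_loc[of "x_s t" "t @ True # u" "t @ True # True # u" f] x_s_1[of t u]
    pi_conj[of "x_s t" "loc (t @ True # u) f"] by simp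

lemma y_s_G0_iff: "\<not> constant_word s \<Longrightarrow> loc s ymap \<in> G0"
  using y_s_G0 by (simp add: y_s_def)

lemma Y_class: "\<not> constant_word s \<Longrightarrow> cls (y_s s) = cls (y_s [True, False])"
  unfolding y_s_def
proof (rule reduce_words[where P = "\<lambda>s. cls (loc s ymap)"])
  fix t u
  show "\<not> constant_word (t @ False # False # u) \<Longrightarrow> cls (loc (t @ False # u) ymap) = cls (loc (t @ False # False # u) ymap)"
    by (rule move1) (rule y_s_G0_iff)
  show "cls (loc (t @ True # False # u) ymap) = cls (loc (t @ False # True # u) ymap)"
    by (rule move2) (rule y_s_G0_iff, simp add: constant_word_iff)
  show "\<not> constant_word (t @ True # u) \<Longrightarrow> cls (loc (t @ True # True # u) ymap) = cls (loc (t @ True # u) ymap)"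
    by (rule move3) (rule y_s_G0_iff)
qed

lemma x_s_G0': "loc s xmap \<in> G0"
  using x_s_G0 by (simp add: x_s_def)

lemma X_class_nc: "\<not> constant_word s \<Longrightarrow> cls (x_s s) = cls (x_s [True, False])"
  unfolding x_s_def
proof (rule reduce_words[where P = "\<lambda>s. cls (loc s xmap)"])
  fix t u
  show "cls (loc (t @ False # u) xmap) = cls (loc (t @ False # False # u) xmap)"
    by (rule move1) (rule x_s_G0')
  show "cls (loc (t @ True # False # u) xmap) = cls (loc (t @ False # True # u) xmap)"
    by (rule move2) (rule x_s_G0')
  show "cls (loc (t @ True # True # u) xmap) = cls (loc (t @ True # u) xmap)"
    by (rule move3) (rule x_s_G0')
qed

lemma X_rep_T: "cls (x_s (replicate (Suc n) True)) = cls (x_s [True])"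
proof (induction n)
  case (Suc n)
  have "cls (x_s (replicate (Suc (Suc n)) True)) = cls (x_s (replicate (Suc n) True))"
    using move3[of "[]" "replicate n True" xmap] x_s_G0' by (simp add: x_s_def)
  then show ?case using Suc by simp
qed simp

lemma X_rep_F: "cls (x_s (replicate (Suc n) False)) = cls (x_s [False])"
proof (induction n)
  case (Suc n)
  have "cls (x_s (replicate (Suc (Suc n)) False)) = cls (x_s (replicate (Suc n) False))"
    using move1[of "[]" "replicate n False" xmap] x_s_G0' by (simp add: x_s_def)
  then show ?case using Suc by simp
qed simp

lemma loc_single: "loc [a] f (prepend (b # w) \<eta>) = (if a = b then prepend [a] (f (prepend w \<eta>)) else prepend (b # w) \<eta>)"
proof (cases "a = b")
  case True then show ?thesis using loc_prepend_append[of "[a]" f w \<eta>] by simp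
next
  case False
  have "\<not> has_prefix [a] (prepend (b # w) \<eta>)" using False by (simp add: has_prefix_def)
  then show ?thesis using False by (simp add: loc_nopre)
qed

lemma seq_decomp3: "\<xi> = prepend [\<xi> 0, \<xi> (Suc 0), \<xi> (Suc (Suc 0))] (sdrop 3 \<xi>)"
  using seq_decomp[of \<xi> 3] by (simp add: numeral_3_eq_3)

lemma seq_cases3: obtains a b c \<zeta> where "\<xi> = prepend [a, b, c] \<zeta>"
  using seq_decomp3 by blast

lemma xx_rel: "xmap \<circ> xmap = loc [True] xmap \<circ> xmap \<circ> loc [False] xmap"
proof (rule ext)
  fix \<xi>
  obtain a b c \<zeta> where e: "\<xi> = prepend [a, b, c] \<zeta>" by (rule seq_cases3)
  show "(xmap \<circ> xmap) \<xi> = (loc [True] xmap \<circ> xmap \<circ> loc [False] xmap) \<xi>"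
    unfolding e
    by (cases a; cases b; cases c)
       (simp_all add: xmap_00 xmap_01 xmap_1 loc_single)
qed

lemma xx_rel_s: "x_s s \<circ> x_s s = x_s (s @ [True]) \<circ> x_s s \<circ> x_s (s @ [False])"
proof -
  have "x_s s \<circ> x_s s = loc s (xmap \<circ> xmap)" by (simp add: x_s_def loc_comp)
  also have "\<dots> = loc s (loc [True] xmap \<circ> xmap \<circ> loc [False] xmap)" by (simp add: xx_rel)
  also have "\<dots> = loc s (loc [True] xmap) \<circ> loc s xmap \<circ> loc s (loc [False] xmap)" by (simp add: loc_comp)
  also have "\<dots> = x_s (s @ [True]) \<circ> x_s s \<circ> x_s (s @ [False])" by (simp add: x_s_def loc_loc)
  finally show ?thesis .
qed

lemma (in comm_group) split_aux: "x \<in> carrier G \<Longrightarrow> y \<in> carrier G \<Longrightarrow> z \<in> carrier G \<Longrightarrow>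
   x \<otimes> x = y \<otimes> x \<otimes> z \<Longrightarrow> x = y \<otimes> z"
proof -
  assume c: "x \<in> carrier G" "y \<in> carrier G" "z \<in> carrier G" and e: "x \<otimes> x = y \<otimes> x \<otimes> z"
  have "y \<otimes> x \<otimes> z = (y \<otimes> z) \<otimes> x" using c by (simp add: m_assoc m_comm[of x z])
  then have "x \<otimes> x = (y \<otimes> z) \<otimes> x" using e by simp
  then show "x = y \<otimes> z" using c right_cancel[of x x "y \<otimes> z"] by simp
qed

lemma X_split: "cls (x_s s) = cls (x_s (s @ [True])) \<otimes>\<^bsub>Q\<^esub> cls (x_s (s @ [False]))"
proof -
  interpret Q: comm_group Q by (rule Q_comm)
  have "cls (x_s s \<circ> x_s s) = cls (x_s (s @ [True]) \<circ> x_s s \<circ> x_s (s @ [False]))" by (simp only: xx_rel_s)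
  moreover have "cls (x_s s \<circ> x_s s) = cls (x_s s) \<otimes>\<^bsub>Q\<^esub> cls (x_s s)"
    by (rule pi_comp[OF x_s_G0 x_s_G0])
  moreover have "cls (x_s (s @ [True]) \<circ> x_s s \<circ> x_s (s @ [False])) = cls (x_s (s @ [True])) \<otimes>\<^bsub>Q\<^esub> cls (x_s s) \<otimes>\<^bsub>Q\<^esub> cls (x_s (s @ [False]))"
    by (simp only: pi_comp[OF G0_comp[OF x_s_G0 x_s_G0] x_s_G0] pi_comp[OF x_s_G0 x_s_G0])
  ultimately have "cls (x_s s) \<otimes>\<^bsub>Q\<^esub> cls (x_s s) = cls (x_s (s @ [True])) \<otimes>\<^bsub>Q\<^esub> cls (x_s s) \<otimes>\<^bsub>Q\<^esub> cls (x_s (s @ [False]))"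
    by simp
  then show ?thesis by (rule Q.split_aux[OF pi_carrier[OF x_s_G0] pi_carrier[OF x_s_G0] pi_carrier[OF x_s_G0]])
qed

lemma X_FT: "cls (x_s (t @ [False, True])) = \<one>\<^bsub>Q\<^esub>"
proof -
  interpret Q: comm_group Q by (rule Q_comm)
  have a: "cls (x_s (t @ [False])) = cls (x_s (t @ [False, True])) \<otimes>\<^bsub>Q\<^esub> cls (x_s (t @ [False, False]))"
    using X_split[of "t @ [False]"] by simp
  have b: "cls (x_s (t @ [False])) = cls (x_s (t @ [False, False]))"
    using move1[of t "[]" xmap] x_s_G0' by (simp add: x_s_def)
  have "cls (x_s (t @ [False, False])) = cls (x_s (t @ [False, True])) \<otimes>\<^bsub>Q\<^esub> cls (x_s (t @ [False, False]))"
    using a b by simp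
  then show ?thesis using Q.r_cancel_one'[of "cls (x_s (t @ [False, False]))" "cls (x_s (t @ [False, True]))"]
    pi_carrier[OF x_s_G0] by blast
qed

lemma X_nc: "\<not> constant_word s \<Longrightarrow> cls (x_s s) = \<one>\<^bsub>Q\<^esub>"
proof -
  assume "\<not> constant_word s"
  then have "cls (x_s s) = cls (x_s [True, False])" by (rule X_class_nc)
  also have "\<dots> = cls (x_s [False, True])"
    using move2[of "[]" "[]" xmap] x_s_G0' by (simp add: x_s_def)
  also have "\<dots> = \<one>\<^bsub>Q\<^esub>" using X_FT[of "[]"] by simp
  finally show ?thesis .
qed

definition cA where "cA = cls xmap"
definition cB where "cB = cls (x_s [True])"
definition cC where "cC = cls (y_s [True, False])"

lemma cABC_carrier: "cA \<in> carrier Q" "cB \<in> carrier Q" "cC \<in> carrier Q"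
  by (simp_all add: cA_def cB_def cC_def pi_carrier y_s_G0 constant_word_iff)
     (metis x_s_G0 x_s_def loc_Nil pi_carrier)

definition tri :: "int \<Rightarrow> int \<Rightarrow> int \<Rightarrow> (seq \<Rightarrow> seq) set" where
  "tri i j k = cA [^]\<^bsub>Q\<^esub> i \<otimes>\<^bsub>Q\<^esub> cB [^]\<^bsub>Q\<^esub> j \<otimes>\<^bsub>Q\<^esub> cC [^]\<^bsub>Q\<^esub> k"

lemma (in comm_group) tri_mult_aux: "a \<in> carrier G \<Longrightarrow> b \<in> carrier G \<Longrightarrow> c \<in> carrier G \<Longrightarrow>
  (a[^]i \<otimes> b[^]j \<otimes> c[^]k) \<otimes> (a[^]i' \<otimes> b[^]j' \<otimes> c[^]k') = a[^](i+i'::int) \<otimes> b[^](j+j'::int) \<otimes> c[^](k+k'::int)"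
  by (simp add: int_pow_mult m_ac)

lemma (in comm_group) tri_inv_aux: "a \<in> carrier G \<Longrightarrow> b \<in> carrier G \<Longrightarrow> c \<in> carrier G \<Longrightarrow>
  inv (a[^]i \<otimes> b[^]j \<otimes> c[^]k) = a[^](-i::int) \<otimes> b[^](-j::int) \<otimes> c[^](-k::int)"
  by (simp add: int_pow_neg inv_mult m_ac)

lemma tri_mult: "tri i j k \<otimes>\<^bsub>Q\<^esub> tri i' j' k' = tri (i+i') (j+j') (k+k')"
  unfolding tri_def using comm_group.tri_mult_aux[OF Q_comm cABC_carrier] .

lemma tri_inv: "inv\<^bsub>Q\<^esub> tri i j k = tri (-i) (-j) (-k)"
  unfolding tri_def using comm_group.tri_inv_aux[OF Q_comm cABC_carrier] .

lemma X_letter: "\<exists>i j. cls (x_s s) = tri i j 0"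
proof -
  interpret Q: comm_group Q by (rule Q_comm)
  note car = cABC_carrier
  have X0: "cls (x_s []) = cB \<otimes>\<^bsub>Q\<^esub> cls (x_s [False])" using X_split[of "[]"] by (simp add: cB_def)
  have XF: "cls (x_s [False]) = tri 1 (-1) 0"
  proof -
    have "cA = cB \<otimes>\<^bsub>Q\<^esub> cls (x_s [False])" using X0 by (simp add: cA_def x_s_def)
    then have "cls (x_s [False]) = inv\<^bsub>Q\<^esub> cB \<otimes>\<^bsub>Q\<^esub> cA"
      using car by (metis Q.inv_solve_left pi_carrier x_s_G0)
    then show ?thesis using car by (simp add: tri_def Q.int_pow_neg Q.m_comm Q.int_pow_1)
  qed
  show ?thesis
  proof (cases "constant_word s")
    case False then show ?thesis using X_nc[OF False] car by (intro exI[of _ 0]) (simp add: tri_def)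
  next
    case True
    then obtain n where "s = replicate n False \<or> s = replicate n True" by (auto simp: constant_word_def)
    then consider "s = []" | m where "s = replicate (Suc m) False" | m where "s = replicate (Suc m) True"
      by (cases n) auto
    then show ?thesis
    proof cases
      case 1 then show ?thesis using car by (intro exI[of _ 1] exI[of _ 0]) (simp add: tri_def cA_def x_s_def)
    next
      case 2 then show ?thesis using X_rep_F XF by blast
    next
      case 3 then show ?thesis using X_rep_T car by (intro exI[of _ 0] exI[of _ 1]) (simp add: tri_def cB_def)
    qed
  qed
qed

lemma Y_letter: "\<not> constant_word s \<Longrightarrow> cls (y_s s) = tri 0 0 1"
proof -
  interpret Q: comm_group Q by (rule Q_comm)
  assume "\<not> constant_word s"
  then show ?thesis using Y_class cABC_carrier by (simp add: tri_def cC_def)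
qed



section \<open>Germs at the ends\<close>

definition germ :: "bool \<Rightarrow> (seq \<Rightarrow> seq) \<Rightarrow> int \<Rightarrow> bool" where
  "germ b g p \<longleftrightarrow> (\<exists>M. \<forall>N\<ge>M. int N + p \<ge> 0 \<and>
      (\<forall>\<zeta>. g (prepend (replicate N b) \<zeta>) = prepend (replicate (nat (int N + p)) b) \<zeta>))"

lemma germ_id: "germ b id 0"
  unfolding germ_def by auto

lemma germ_comp: assumes f: "germ b f p" and g: "germ b g q" shows "germ b (f \<circ> g) (p + q)"
proof -
  obtain Mf where Mf: "\<And>N. N \<ge> Mf \<Longrightarrow> int N + p \<ge> 0 \<and>
      (\<forall>\<zeta>. f (prepend (replicate N b) \<zeta>) = prepend (replicate (nat (int N + p)) b) \<zeta>)"
    using f unfolding germ_def by blast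
  obtain Mg where Mg: "\<And>N. N \<ge> Mg \<Longrightarrow> int N + q \<ge> 0 \<and>
      (\<forall>\<zeta>. g (prepend (replicate N b) \<zeta>) = prepend (replicate (nat (int N + q)) b) \<zeta>)"
    using g unfolding germ_def by blast
  show ?thesis unfolding germ_def
  proof (intro exI[of _ "Mf + Mg + nat \<bar>q\<bar>"] allI impI conjI)
    fix N assume N: "N \<ge> Mf + Mg + nat \<bar>q\<bar>"
    define N' where "N' = nat (int N + q)"
    have N'1: "int N' = int N + q" using N unfolding N'_def by linarith
    have N'2: "N' \<ge> Mf" using N'1 N by linarith
    show "int N + (p + q) \<ge> 0" using Mf[OF N'2] N'1 by linarith
    fix \<zeta>
    have "g (prepend (replicate N b) \<zeta>) = prepend (replicate N' b) \<zeta>"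
      using Mg[of N] N unfolding N'_def by simp
    then show "(f \<circ> g) (prepend (replicate N b) \<zeta>) = prepend (replicate (nat (int N + (p + q))) b) \<zeta>"
      using Mf[OF N'2] N'1 by (simp add: algebra_simps)
  qed
qed

lemma germ_finv: assumes bf: "bij f" and f: "germ b f p" shows "germ b (finv f) (- p)"
proof -
  obtain M where M: "\<And>N. N \<ge> M \<Longrightarrow> int N + p \<ge> 0 \<and>
      (\<forall>\<zeta>. f (prepend (replicate N b) \<zeta>) = prepend (replicate (nat (int N + p)) b) \<zeta>)"
    using f unfolding germ_def by blast
  show ?thesis unfolding germ_def
  proof (intro exI[of _ "M + nat \<bar>p\<bar>"] allI impI conjI)
    fix N assume N: "N \<ge> M + nat \<bar>p\<bar>"
    define N' where "N' = nat (int N - p)"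
    have N'1: "int N' = int N - p" using N unfolding N'_def by linarith
    have N'2: "N' \<ge> M" using N'1 N by linarith
    show "int N + - p \<ge> 0" using N by linarith
    fix \<zeta>
    have "f (prepend (replicate N' b) \<zeta>) = prepend (replicate N b) \<zeta>"
      using M[OF N'2] N'1 by simp
    then have "finv f (prepend (replicate N b) \<zeta>) = prepend (replicate N' b) \<zeta>"
      using bf by (metis bij_inv_eq_iff)
    then show "finv f (prepend (replicate N b) \<zeta>) = prepend (replicate (nat (int N + - p)) b) \<zeta>"
      unfolding N'_def by simp
  qed
qed

lemma rep_prepend_inj:
  assumes "prepend (replicate A b) (\<lambda>_. \<not> b) = prepend (replicate B b) (\<lambda>_. \<not> b)" shows "A = B"
proof (rule ccontr)
  assume "A \<noteq> B"
  then have "A < B \<or> B < A" by arith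
  then show False
  proof
    assume "A < B" then show False using fun_cong[OF assms, of A] by (simp add: prepend_def)
  next
    assume "B < A" then show False using fun_cong[OF assms, of B] by (simp add: prepend_def)
  qed
qed

lemma germ_unique: assumes "germ b f p" "germ b f q" shows "p = q"
proof -
  obtain M1 where M1: "\<And>N. N \<ge> M1 \<Longrightarrow> int N + p \<ge> 0 \<and>
      (\<forall>\<zeta>. f (prepend (replicate N b) \<zeta>) = prepend (replicate (nat (int N + p)) b) \<zeta>)"
    using assms(1) unfolding germ_def by blast
  obtain M2 where M2: "\<And>N. N \<ge> M2 \<Longrightarrow> int N + q \<ge> 0 \<and>
      (\<forall>\<zeta>. f (prepend (replicate N b) \<zeta>) = prepend (replicate (nat (int N + q)) b) \<zeta>)"
    using assms(2) unfolding germ_def by blast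
  let ?N = "M1 + M2"
  have "prepend (replicate (nat (int ?N + p)) b) (\<lambda>_. \<not> b) = prepend (replicate (nat (int ?N + q)) b) (\<lambda>_. \<not> b)"
    using M1[of ?N] M2[of ?N] by auto
  then have "nat (int ?N + p) = nat (int ?N + q)" by (rule rep_prepend_inj)
  then show ?thesis using M1[of ?N] M2[of ?N] by auto
qed

lemma germ_loc_nonpref:
  assumes "s \<noteq> replicate (length s) b" shows "germ b (loc s f) 0"
  unfolding germ_def
proof (intro exI[of _ "length s"] allI impI conjI)
  fix N assume N: "length s \<le> N"
  show "int N + 0 \<ge> 0" by simp
  fix \<zeta>
  have "\<not> has_prefix s (prepend (replicate N b) \<zeta>)"
  proof
    assume h: "has_prefix s (prepend (replicate N b) \<zeta>)"
    have "s = replicate (length s) b"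
    proof (rule nth_equalityI)
      fix i assume "i < length s"
      then show "s ! i = replicate (length s) b ! i"
        using h N unfolding has_prefix_def by (auto simp: prepend_def)
    qed simp
    then show False using assms by simp
  qed
  then show "loc s f (prepend (replicate N b) \<zeta>) = prepend (replicate (nat (int N + 0)) b) \<zeta>"
    by (simp add: loc_nopre)
qed

lemma germ_loc_rep:
  assumes f: "germ b f p" shows "germ b (loc (replicate n b) f) p"
proof -
  obtain M where M: "\<And>N. N \<ge> M \<Longrightarrow> int N + p \<ge> 0 \<and>
      (\<forall>\<zeta>. f (prepend (replicate N b) \<zeta>) = prepend (replicate (nat (int N + p)) b) \<zeta>)"
    using f unfolding germ_def by blast
  show ?thesis unfolding germ_def
  proof (intro exI[of _ "n + M"] allI impI conjI)
    fix N assume N: "N \<ge> n + M"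
    then have N2: "N - n \<ge> M" by simp
    show "int N + p \<ge> 0" using M[OF N2] N by linarith
    fix \<zeta>
    have r: "replicate N b = replicate n b @ replicate (N - n) b"
      using N by (metis le_add1 le_add_diff_inverse le_trans replicate_add)
    have "loc (replicate n b) f (prepend (replicate N b) \<zeta>)
        = prepend (replicate n b) (prepend (replicate (nat (int (N - n) + p)) b) \<zeta>)"
      using M[OF N2] by (simp add: r loc_prepend_append)
    also have "\<dots> = prepend (replicate n b @ replicate (nat (int (N - n) + p)) b) \<zeta>"
      by (simp add: prepend_append)
    also have "replicate n b @ replicate (nat (int (N - n) + p)) b = replicate (n + nat (int (N - n) + p)) b"
      by (simp add: replicate_add)
    also have "n + nat (int (N - n) + p) = nat (int N + p)"
    proof -
      have "0 \<le> int (N - n) + p" using M[OF N2] by simp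
      then have "nat (int n + (int (N - n) + p)) = n + nat (int (N - n) + p)"
        by (simp add: nat_add_distrib)
      moreover have "int n + (int (N - n) + p) = int N + p" using N by simp
      ultimately show ?thesis by simp
    qed
    finally show "loc (replicate n b) f (prepend (replicate N b) \<zeta>) = prepend (replicate (nat (int N + p)) b) \<zeta>" .
  qed
qed

lemma germ_xmap_T: "germ True xmap 1"
  unfolding germ_def
proof (intro exI[of _ 1] allI impI conjI)
  fix N :: nat assume "1 \<le> N"
  then obtain N' where N: "N = Suc N'" by (cases N) auto
  show "int N + 1 \<ge> 0" by simp
  fix \<zeta>
  have "int N + 1 = int (Suc (Suc N'))" using N by simp
  then have e: "nat (int N + 1) = Suc (Suc N')" by (metis nat_int)
  show "xmap (prepend (replicate N True) \<zeta>) = prepend (replicate (nat (int N + 1)) True) \<zeta>"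
    unfolding e using xmap_1[of "replicate N' True" \<zeta>] N by simp
qed

lemma germ_xmap_F: "germ False xmap (-1)"
  unfolding germ_def
proof (intro exI[of _ 2] allI impI conjI)
  fix N :: nat assume "2 \<le> N"
  then obtain N' where N: "N = Suc (Suc N')" by (metis add_2_eq_Suc le_Suc_ex)
  show "int N + -1 \<ge> 0" using N by simp
  fix \<zeta>
  have "int N + -1 = int (Suc N')" using N by simp
  then have e: "nat (int N + -1) = Suc N'" by (metis nat_int)
  show "xmap (prepend (replicate N False) \<zeta>) = prepend (replicate (nat (int N + -1)) False) \<zeta>"
    unfolding e using xmap_00[of "replicate N' False" \<zeta>] N by simp
qed

lemma germ_xmap: "\<exists>p. germ b xmap p"
  using germ_xmap_T germ_xmap_F by (cases b) auto

lemma germ_x_s: "\<exists>p. germ b (x_s s) p"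
proof (cases "s = replicate (length s) b")
  case True
  then show ?thesis using germ_loc_rep germ_xmap unfolding x_s_def by metis
next
  case False
  then show ?thesis using germ_loc_nonpref unfolding x_s_def by blast
qed

lemma germ_y_s: "\<not> constant_word s \<Longrightarrow> germ b (y_s s) 0"
  unfolding y_s_def by (rule germ_loc_nonpref) (cases b; auto simp: constant_word_def)

lemma G0_germ: "g \<in> G0 \<Longrightarrow> \<exists>p. germ b g p"
  unfolding G0_def
proof (induction g rule: generate.induct)
  case one then show ?case using germ_id Sym_one by metis
next
  case (incl h) then show ?case unfolding gens_def using germ_x_s germ_y_s by blast
next
  case (inv h)
  then have "bij h" using gens_carrier Sym_carrier by auto
  moreover have "\<exists>p. germ b h p" using inv unfolding gens_def using germ_x_s germ_y_s by blast
  ultimately show ?case using germ_finv Sym_inv by metis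
next
  case (eng h1 h2)
  then have "bij h1" "bij h2" using G0_bij G0_def by auto
  then show ?case using eng germ_comp Sym_mult by metis
qed

lemma N_germ: "g \<in> G0' \<Longrightarrow> germ b g 0"
  unfolding G0'_def derived_def
proof (induction g rule: generate.induct)
  case one then show ?case using germ_id Sym_one by metis
next
  case (incl h)
  then obtain h1 h2 where h: "h1 \<in> G0" "h2 \<in> G0"
    "h = h1 \<otimes>\<^bsub>Sym\<^esub> h2 \<otimes>\<^bsub>Sym\<^esub> inv\<^bsub>Sym\<^esub> h1 \<otimes>\<^bsub>Sym\<^esub> inv\<^bsub>Sym\<^esub> h2" by blast
  have b: "bij h1" "bij h2" using h G0_bij by auto
  have e: "h = h1 \<circ> h2 \<circ> finv h1 \<circ> finv h2"
    using h b by (simp add: Sym_inv Sym_mult bij_finv bij_comp)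
  obtain p q where "germ b h1 p" "germ b h2 q" using G0_germ h by blast
  then have "germ b (h1 \<circ> h2 \<circ> finv h1 \<circ> finv h2) (p + q + - p + - q)"
    using b by (intro germ_comp germ_finv)
  then have "germ b h (p + q + - p + - q)" using e by (simp only:)
  then show ?case by simp
next
  case (inv h)
  then obtain h1 h2 where h: "h1 \<in> G0" "h2 \<in> G0"
    "h = h1 \<otimes>\<^bsub>Sym\<^esub> h2 \<otimes>\<^bsub>Sym\<^esub> inv\<^bsub>Sym\<^esub> h1 \<otimes>\<^bsub>Sym\<^esub> inv\<^bsub>Sym\<^esub> h2" by blast
  have b: "bij h1" "bij h2" using h G0_bij by auto
  have e: "h = h1 \<circ> h2 \<circ> finv h1 \<circ> finv h2"
    using h b by (simp add: Sym_inv Sym_mult bij_finv bij_comp)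
  have bh: "bij h" using e b by (simp add: bij_finv bij_comp)
  obtain p q where "germ b h1 p" "germ b h2 q" using G0_germ h by blast
  then have "germ b (h1 \<circ> h2 \<circ> finv h1 \<circ> finv h2) (p + q + - p + - q)"
    using b by (intro germ_comp germ_finv)
  then have "germ b h (p + q + - p + - q)" using e by (simp only:)
  then have "germ b h 0" by simp
  then show ?case using germ_finv[OF bh] Sym_inv[OF bh] by fastforce
next
  case (eng h1 h2)
  have "derived Sym G0 \<subseteq> carrier Sym" by (rule group.derived_in_carrier[OF grpSym subgroup.subset[OF G0_subgroup]])
  then have "bij h1" "bij h2" using eng Sym_carrier unfolding derived_def by auto
  then show ?case using eng germ_comp[of b h1 0 h2 0] Sym_mult by (simp del: comp_apply)
qed



lemma bij_letter[simp]: "bij (letter_map l)"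
  by (cases l) simp_all

definition lev :: "letter \<Rightarrow> bool \<Rightarrow> seq \<Rightarrow> seq" where
  "lev l e = (if e then letter_map l else finv (letter_map l))"

lemma bij_lev[simp]: "bij (lev l e)"
  by (simp add: lev_def bij_finv)

lemma word_eval_Nil: "word_eval [] = id"
  by (simp add: Sym_one)

lemma word_eval_bij: "bij (word_eval w)"
proof (induction w)
  case Nil then show ?case by (simp only: word_eval_Nil bij_id)
next
  case (Cons a w)
  obtain l e where a: "a = (l, e)" by fastforce
  have "word_eval (a # w) = lev l e \<otimes>\<^bsub>Sym\<^esub> word_eval w"
    using Cons.IH by (simp add: a lev_def Sym_inv word_eval.simps(2))
  also have "\<dots> = lev l e \<circ> word_eval w" by (rule Sym_mult) (simp_all add: Cons.IH)
  finally have e: "word_eval (a # w) = lev l e \<circ> word_eval w" .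
  show ?case unfolding e by (rule bij_comp) (simp_all add: Cons.IH)
qed

lemma word_eval_Cons: "word_eval ((l, e) # w) = lev l e \<circ> word_eval w"
  using word_eval_bij[of w] by (simp add: Sym_inv Sym_mult bij_finv lev_def)

declare word_eval.simps[simp del]

lemma word_eval_append: "word_eval (w @ v) = word_eval w \<circ> word_eval v"
proof (induction w)
  case Nil then show ?case by (simp add: word_eval_Nil)
next
  case (Cons a w)
  obtain l e where a: "a = (l, e)" by fastforce
  show ?case using Cons by (simp add: a word_eval_Cons comp_assoc)
qed

definition invw :: "(letter \<times> bool) list \<Rightarrow> (letter \<times> bool) list" where
  "invw w = rev (map (\<lambda>(l, e). (l, \<not> e)) w)"

lemma finv_lev: "finv (lev l e) = lev l (\<not> e)"
  by (cases e) (simp_all add: lev_def inv_inv_eq)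

lemma word_eval_invw: "word_eval (invw w) = finv (word_eval w)"
proof (induction w)
  case Nil then show ?case by (simp add: invw_def word_eval_Nil)
next
  case (Cons a w)
  obtain l e where a: "a = (l, e)" by fastforce
  have "invw (a # w) = invw w @ [(l, \<not> e)]" by (simp add: invw_def a)
  then have "word_eval (invw (a # w)) = finv (word_eval w) \<circ> lev l (\<not> e)"
    using Cons by (simp add: word_eval_append word_eval_Cons word_eval_Nil)
  also have "\<dots> = finv (lev l e \<circ> word_eval w)"
    using word_eval_bij[of w] by (simp add: o_inv_distrib finv_lev)
  finally show ?case by (simp only: a word_eval_Cons)
qed

lemma yexp_append: "y_exponent (w @ v) = y_exponent w + y_exponent v"
proof (induction w)
  case (Cons a w)
  obtain l e where a: "a = (l, e)" by fastforce
  show ?case using Cons by (cases l) (simp_all add: a)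
qed simp

lemma yexp_invw: "y_exponent (invw w) = - y_exponent w"
proof (induction w)
  case Nil then show ?case by (simp add: invw_def)
next
  case (Cons a w)
  obtain l e where a: "a = (l, e)" by fastforce
  have "invw (a # w) = invw w @ [(l, \<not> e)]" by (simp add: invw_def a)
  then show ?case using Cons by (cases l) (simp_all add: a yexp_append)
qed

lemma valid_append: "valid_word (w @ v) \<longleftrightarrow> valid_word w \<and> valid_word v"
  by (auto simp: valid_word_def)

lemma valid_invw: "valid_word (invw w) \<longleftrightarrow> valid_word w"
  by (auto simp: valid_word_def invw_def)

lemma valid_Cons: "valid_word ((l, e) # w) \<longleftrightarrow> valid_word [(l, e)] \<and> valid_word w"
  by (auto simp: valid_word_def)

lemma G0_word: "g \<in> G0 \<Longrightarrow> \<exists>w. valid_word w \<and> word_eval w = g"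
  unfolding G0_def
proof (induction g rule: generate.induct)
  case one then show ?case by (intro exI[of _ "[]"]) (simp add: valid_word_def word_eval_Nil Sym_one)
next
  case (incl h)
  then consider s where "h = x_s s" | s where "h = y_s s" "\<not> constant_word s" by (auto simp: gens_def)
  then show ?case
  proof cases
    case 1 then show ?thesis
      by (intro exI[of _ "[(LX s, True)]"]) (simp add: valid_word_def word_eval_Cons word_eval_Nil lev_def)
  next
    case 2 then show ?thesis
      by (intro exI[of _ "[(LY s, True)]"]) (simp add: valid_word_def word_eval_Cons word_eval_Nil lev_def)
  qed
next
  case (inv h)
  then consider s where "h = x_s s" | s where "h = y_s s" "\<not> constant_word s" by (auto simp: gens_def)
  then show ?case
  proof cases
    case 1 then show ?thesis
      by (intro exI[of _ "[(LX s, False)]"]) (simp add: valid_word_def word_eval_Cons word_eval_Nil lev_def Sym_inv)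
  next
    case 2 then show ?thesis
      by (intro exI[of _ "[(LY s, False)]"]) (simp add: valid_word_def word_eval_Cons word_eval_Nil lev_def Sym_inv)
  qed
next
  case (eng h1 h2)
  then obtain w1 w2 where "valid_word w1" "word_eval w1 = h1" "valid_word w2" "word_eval w2 = h2" by blast
  moreover have "bij h1" "bij h2" using eng G0_bij unfolding G0_def by auto
  ultimately show ?case
    by (intro exI[of _ "w1 @ w2"]) (simp add: valid_append word_eval_append Sym_mult)
qed

lemma N_word: "g \<in> G0' \<Longrightarrow> \<exists>w. valid_word w \<and> word_eval w = g \<and> y_exponent w = 0"
  unfolding G0'_def derived_def
proof (induction g rule: generate.induct)
  case one then show ?case by (intro exI[of _ "[]"]) (simp add: valid_word_def word_eval_Nil Sym_one)
next
  case (incl h)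
  then obtain h1 h2 where h: "h1 \<in> G0" "h2 \<in> G0"
    "h = h1 \<otimes>\<^bsub>Sym\<^esub> h2 \<otimes>\<^bsub>Sym\<^esub> inv\<^bsub>Sym\<^esub> h1 \<otimes>\<^bsub>Sym\<^esub> inv\<^bsub>Sym\<^esub> h2" by blast
  obtain w1 w2 where w: "valid_word w1" "word_eval w1 = h1" "valid_word w2" "word_eval w2 = h2"
    using G0_word h by metis
  have b: "bij h1" "bij h2" using h G0_bij by auto
  have e: "h = h1 \<circ> h2 \<circ> finv h1 \<circ> finv h2"
    using h b by (simp add: Sym_inv Sym_mult bij_finv bij_comp)
  show ?case using w e
    by (intro exI[of _ "w1 @ w2 @ invw w1 @ invw w2"])
       (simp add: valid_append valid_invw word_eval_append word_eval_invw yexp_append yexp_invw comp_assoc)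
next
  case (inv h)
  then obtain h1 h2 where h: "h1 \<in> G0" "h2 \<in> G0"
    "h = h1 \<otimes>\<^bsub>Sym\<^esub> h2 \<otimes>\<^bsub>Sym\<^esub> inv\<^bsub>Sym\<^esub> h1 \<otimes>\<^bsub>Sym\<^esub> inv\<^bsub>Sym\<^esub> h2" by blast
  obtain w1 w2 where w: "valid_word w1" "word_eval w1 = h1" "valid_word w2" "word_eval w2 = h2"
    using G0_word h by metis
  have b: "bij h1" "bij h2" using h G0_bij by auto
  have e: "h = h1 \<circ> h2 \<circ> finv h1 \<circ> finv h2"
    using h b by (simp add: Sym_inv Sym_mult bij_finv bij_comp)
  let ?w = "w1 @ w2 @ invw w1 @ invw w2"
  have "valid_word ?w \<and> word_eval ?w = h \<and> y_exponent ?w = 0" using w e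
    by (simp add: valid_append valid_invw word_eval_append word_eval_invw yexp_append yexp_invw comp_assoc)
  moreover have "bij h" using e b by (simp add: bij_finv bij_comp)
  ultimately show ?case
    by (intro exI[of _ "invw ?w"]) (simp add: valid_invw word_eval_invw yexp_invw Sym_inv)
next
  case (eng h1 h2)
  then obtain w1 w2 where ww: "valid_word w1" "word_eval w1 = h1" "y_exponent w1 = 0"
      "valid_word w2" "word_eval w2 = h2" "y_exponent w2 = 0" by blast
  moreover have "bij h1" "bij h2" using ww(2,5) word_eval_bij by auto
  ultimately show ?case
    by (intro exI[of _ "w1 @ w2"]) (simp add: valid_append word_eval_append Sym_mult yexp_append)
qed

lemma letter_G0: "valid_word [(l, e)] \<Longrightarrow> letter_map l \<in> G0"
  by (cases l) (auto simp: valid_word_def y_s_G0)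

lemma lev_cls: assumes v: "valid_word [(l, e)]"
  shows "lev l e \<in> G0 \<and> (\<exists>i j. cls (lev l e) = tri i j (y_exponent [(l, e)]))"
proof -
  have lG: "letter_map l \<in> G0" by (rule letter_G0[OF v])
  have levG: "lev l e \<in> G0" using lG by (simp add: lev_def G0_finv)
  obtain i j where l: "cls (letter_map l) = tri i j (y_exponent [(l, True)])"
  proof (cases l)
    case (LX s)
    then obtain i j where "cls (x_s s) = tri i j 0" using X_letter by blast
    then show ?thesis using that[of i j] LX by simp
  next
    case (LY s)
    then have "\<not> constant_word s" using v by (simp add: valid_word_def)
    then show ?thesis using that[of 0 0] LY Y_letter by simp
  qed
  show ?thesis
  proof (cases e)
    case True then show ?thesis using l levG by (auto simp: lev_def)
  next
    case False
    have "cls (lev l e) = inv\<^bsub>Q\<^esub> cls (letter_map l)" using False pi_finv[OF lG] by (simp add: lev_def)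
    also have "\<dots> = tri (-i) (-j) (- y_exponent [(l, True)])" using l tri_inv by simp
    also have "- y_exponent [(l, True)] = y_exponent [(l, e)]" using False by (cases l) simp_all
    finally show ?thesis using levG by blast
  qed
qed

lemma word_cls: "valid_word w \<Longrightarrow> word_eval w \<in> G0 \<and> (\<exists>i j. cls (word_eval w) = tri i j (y_exponent w))"
proof (induction w)
  case Nil
  interpret Q: comm_group Q by (rule Q_comm)
  have "id \<in> G0" using subgroup.one_closed[OF G0_subgroup] Sym_one by simp
  moreover have "cls id = \<one>\<^bsub>Q\<^esub>"
    using hom_one[OF pi_hom grpGr comm_group.axioms(2)[OF Q_comm]] Sym_one by simp
  moreover have "tri 0 0 0 = \<one>\<^bsub>Q\<^esub>" using cABC_carrier by (simp add: tri_def)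
  ultimately have "word_eval [] \<in> G0 \<and> cls (word_eval []) = tri 0 0 (y_exponent [])"
    by (simp only: word_eval_Nil y_exponent.simps(1))
  then show ?case by blast
next
  case (Cons a w)
  obtain l e where a: "a = (l, e)" by fastforce
  have v: "valid_word [(l, e)]" "valid_word w" using Cons.prems a by (auto simp: valid_word_def)
  have IH: "word_eval w \<in> G0 \<and> (\<exists>i j. cls (word_eval w) = tri i j (y_exponent w))"
    by (rule Cons.IH[OF v(2)])
  then obtain i j where ij: "cls (word_eval w) = tri i j (y_exponent w)" and wG: "word_eval w \<in> G0"
    by blast
  obtain i'' j'' where l2: "cls (lev l e) = tri i'' j'' (y_exponent [(l, e)])" and levG: "lev l e \<in> G0"
    using lev_cls[OF v(1)] by blast
  have ea: "word_eval (a # w) = lev l e \<circ> word_eval w" by (simp only: a word_eval_Cons)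
  have "cls (word_eval (a # w)) = cls (lev l e) \<otimes>\<^bsub>Q\<^esub> cls (word_eval w)"
    unfolding ea by (rule pi_comp[OF levG wG])
  also have "\<dots> = tri (i'' + i) (j'' + j) (y_exponent [(l, e)] + y_exponent w)"
    unfolding l2 ij by (rule tri_mult)
  also have "y_exponent [(l, e)] + y_exponent w = y_exponent (a # w)"
    using yexp_append[of "[(l, e)]" w] a by simp
  finally have "cls (word_eval (a # w)) = tri (i'' + i) (j'' + j) (y_exponent (a # w))" .
  moreover have "word_eval (a # w) \<in> G0" unfolding ea by (rule G0_comp[OF levG wG])
  ultimately show ?case by blast
qed



section \<open>The identification with the reals\<close>

lemma phi_stage_pos: "phi_stage n \<xi> > 0"
proof (induction n arbitrary: \<xi>)
  case 0 then show ?case by simp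
next
  case (Suc n)
  have p: "phi_stage n (sdrop 1 \<xi>) > 0" by (rule Suc.IH)
  then show ?case by (simp add: field_simps add_pos_pos)
qed

lemma phi_stage_bound: "\<not> \<xi> i \<Longrightarrow> i < n \<Longrightarrow> phi_stage n \<xi> \<le> real i + 1"
proof (induction i arbitrary: \<xi> n)
  case 0
  then obtain n' where n: "n = Suc n'" by (cases n) auto
  have p: "phi_stage n' (sdrop 1 \<xi>) > 0" by (rule phi_stage_pos)
  then show ?case using 0 n by (simp add: field_simps)
next
  case (Suc i)
  then obtain n' where n: "n = Suc n'" by (cases n) auto
  have p: "phi_stage n' (sdrop 1 \<xi>) > 0" by (rule phi_stage_pos)
  show ?case
  proof (cases "\<xi> 0")
    case False then show ?thesis using p n by (simp add: field_simps)
  next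
    case True
    have "\<not> sdrop 1 \<xi> i" using Suc.prems by (simp add: sdrop_def)
    then have "phi_stage n' (sdrop 1 \<xi>) \<le> real i + 1" using Suc.IH Suc.prems n by simp
    then show ?thesis using True n by simp
  qed
qed

definition c0 :: ereal where "c0 = The (\<lambda>L. False)"

lemma lim_cases: "lim X = c0 \<or> X \<longlonglongrightarrow> lim X"
proof (cases "\<exists>L. X \<longlonglongrightarrow> L")
  case True then show ?thesis using limI by blast
next
  case False
  then have "(\<lambda>L. X \<longlonglongrightarrow> L) = (\<lambda>L. False)" by auto
  then show ?thesis by (simp add: lim_def c0_def)
qed

lemma phi_small: assumes "\<not> \<xi> i" shows "phi \<xi> = c0 \<or> (0 \<le> phi \<xi> \<and> phi \<xi> \<le> ereal (real i + 1))"
proof -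
  consider "phi \<xi> = c0" | "(\<lambda>n. ereal (phi_stage n \<xi>)) \<longlonglongrightarrow> phi \<xi>"
    using lim_cases unfolding phi_def by blast
  then show ?thesis
  proof cases
    case 2
    have "0 \<le> phi \<xi>"
      by (rule LIMSEQ_le_const[OF 2]) (auto intro!: less_imp_le phi_stage_pos)
    moreover have "phi \<xi> \<le> ereal (real i + 1)"
      by (rule LIMSEQ_le_const2[OF 2]) (use assms phi_stage_bound in \<open>auto intro!: exI[of _ "Suc i"]\<close>)
    ultimately show ?thesis by simp
  qed simp
qed

lemma phi_stage_rep: "phi_stage (k + n) (prepend (replicate k True) \<eta>) = real k + phi_stage n \<eta>"
proof (induction k arbitrary: \<eta>)
  case 0 then show ?case by simp
next
  case (Suc k)
  have "sdrop 1 (prepend (replicate (Suc k) True) \<eta>) = prepend (replicate k True) \<eta>"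
    using sdrop_Cons1[of True "replicate k True" \<eta>] by simp
  then show ?case using Suc.IH by simp
qed

lemma phi_stage_F: "phi_stage n (\<lambda>_. False) = 1 / (real n + 1)"
proof (induction n)
  case (Suc n)
  have "sdrop 1 (\<lambda>_. False) = (\<lambda>_. False)" by (simp add: sdrop_def)
  then have "phi_stage (Suc n) (\<lambda>_. False) = 1 / (1 + (real n + 1))" using Suc by simp
  then show ?case by simp
qed simp

lemma phi_rep: "phi (prepend (replicate k True) (\<lambda>_. False)) = ereal (real k)"
proof -
  let ?X = "\<lambda>n. ereal (phi_stage n (prepend (replicate k True) (\<lambda>_. False)))"
  have i: "(\<lambda>n. 1 / (real n + 1)) = (\<lambda>n. inverse (real (Suc n)))"
    by (rule ext) (simp add: divide_inverse add.commute)
  have "(\<lambda>n. 1 / (real n + 1)) \<longlonglongrightarrow> 0"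
    unfolding i by (rule LIMSEQ_inverse_real_of_nat)
  then have "(\<lambda>n. real k + 1 / (real n + 1)) \<longlonglongrightarrow> real k + 0"
    by (rule tendsto_add[OF tendsto_const])
  then have l: "(\<lambda>n. ereal (real k + 1 / (real n + 1))) \<longlonglongrightarrow> ereal (real k)"
    by (simp only: lim_ereal add_0_right)
  have "(\<lambda>n. ?X (n + k)) = (\<lambda>n. ereal (real k + 1 / (real n + 1)))"
  proof (rule ext)
    fix n
    have e1: "phi_stage (n + k) (prepend (replicate k True) (\<lambda>_. False)) = real k + phi_stage n (\<lambda>_. False)"
      using phi_stage_rep[of k n "\<lambda>_. False"] by (simp only: add.commute)
    show "?X (n + k) = ereal (real k + 1 / (real n + 1))"
      unfolding e1 phi_stage_F ..
  qed
  then have "(\<lambda>n. ?X (n + k)) \<longlonglongrightarrow> ereal (real k)" using l by (simp only:)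
  then have "?X \<longlonglongrightarrow> ereal (real k)" by (rule LIMSEQ_offset)
  then show ?thesis unfolding phi_def by (rule limI)
qed

lemma Phi_rep_T: "Phi (prepend (replicate (Suc k) True) (\<lambda>_. False)) = ereal (real k)"
  using phi_rep[of k] sdrop_Cons1[of True "replicate k True" "\<lambda>_. False"] by (simp add: Phi_def)

lemma Phi_rep_F: "Phi (prepend (replicate (Suc k) False) (\<lambda>_. True)) = ereal (- real k)"
proof -
  have "(\<lambda>n. \<not> prepend (replicate (Suc k) False) (\<lambda>_. True) (n + 1)) = prepend (replicate k True) (\<lambda>_. False)"
    by (rule ext) (simp add: prepend_def)
  then show ?thesis using phi_rep[of k] by (simp add: Phi_def)
qed

lemma Phi_small:
  assumes "j < M" "\<xi> j \<noteq> \<xi> 0" "Phi \<xi> = ereal t"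
  shows "\<bar>t\<bar> \<le> real M + \<bar>real_of_ereal c0\<bar>"
proof (cases "\<xi> 0")
  case True
  then have j: "j \<ge> 1" "\<not> \<xi> j" using assms by (cases j; auto)+
  have "\<not> sdrop 1 \<xi> (j - 1)" using j by (simp add: sdrop_def)
  then have "phi (sdrop 1 \<xi>) = c0 \<or> (0 \<le> phi (sdrop 1 \<xi>) \<and> phi (sdrop 1 \<xi>) \<le> ereal (real (j - 1) + 1))"
    by (rule phi_small)
  moreover have "Phi \<xi> = phi (sdrop 1 \<xi>)" using True by (simp add: Phi_def)
  ultimately have "ereal t = c0 \<or> (0 \<le> ereal t \<and> ereal t \<le> ereal (real (j - 1) + 1))" using assms by simp
  then show ?thesis
  proof
    assume h: "ereal t = c0"
    have "real_of_ereal c0 = t" by (simp add: h[symmetric])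
    then show ?thesis by simp
  next
    assume "0 \<le> ereal t \<and> ereal t \<le> ereal (real (j - 1) + 1)"
    then show ?thesis using j assms(1) real_of_ereal_pos[of "\<bar>c0\<bar>"] by auto
  qed
next
  case False
  then have j: "j \<ge> 1" "\<xi> j" using assms by (cases j; auto)+
  let ?\<eta> = "\<lambda>n. \<not> \<xi> (n + 1)"
  have "\<not> ?\<eta> (j - 1)" using j by simp
  then have "phi ?\<eta> = c0 \<or> (0 \<le> phi ?\<eta> \<and> phi ?\<eta> \<le> ereal (real (j - 1) + 1))"
    by (rule phi_small)
  moreover have "Phi \<xi> = - phi ?\<eta>" using False by (simp add: Phi_def)
  then have "phi ?\<eta> = ereal (- t)" using assms(3) by (metis ereal_uminus_uminus uminus_ereal.simps(1))
  ultimately have "ereal (- t) = c0 \<or> (0 \<le> ereal (-t) \<and> ereal (-t) \<le> ereal (real (j - 1) + 1))"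
    by (simp only:)
  then show ?thesis
  proof
    assume h: "ereal (- t) = c0"
    have "real_of_ereal c0 = - t" by (simp add: h[symmetric])
    then show ?thesis by simp
  next
    assume "0 \<le> ereal (- t) \<and> ereal (- t) \<le> ereal (real (j - 1) + 1)"
    then show ?thesis using j assms(1) real_of_ereal_pos[of "\<bar>c0\<bar>"] by auto
  qed
qed



lemma germ0_fix: "germ b g 0 \<Longrightarrow> \<exists>M. \<forall>N\<ge>M. \<forall>\<zeta>. g (prepend (replicate N b) \<zeta>) = prepend (replicate N b) \<zeta>"
  unfolding germ_def by simp

lemma const_prefix: assumes c: "\<forall>j<M. \<xi> j = \<xi> 0" shows "\<xi> = prepend (replicate M (\<xi> 0)) (sdrop M \<xi>)"
proof (rule ext)
  fix n
  show "\<xi> n = prepend (replicate M (\<xi> 0)) (sdrop M \<xi>) n"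
  proof (cases "n < M")
    case True
    have "\<xi> n = \<xi> 0" using c True by blast
    then show ?thesis using True by (simp add: prepend_def)
  next
    case False then show ?thesis by (simp add: prepend_def sdrop_def)
  qed
qed

lemma N_compact: assumes g: "g \<in> G0'" shows "compact_support g"
proof -
  obtain M1 where M1: "\<And>N \<zeta>. N \<ge> M1 \<Longrightarrow> g (prepend (replicate N True) \<zeta>) = prepend (replicate N True) \<zeta>"
    using germ0_fix[OF N_germ[OF g, of True]] by blast
  obtain M2 where M2: "\<And>N \<zeta>. N \<ge> M2 \<Longrightarrow> g (prepend (replicate N False) \<zeta>) = prepend (replicate N False) \<zeta>"
    using germ0_fix[OF N_germ[OF g, of False]] by blast
  define M where "M = M1 + M2"
  define R where "R = real M + \<bar>real_of_ereal c0\<bar>"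
  show ?thesis unfolding compact_support_def
  proof (intro exI[of _ "cball 0 R"] conjI allI impI)
    show "compact (cball (0::real) R)" by (rule compact_cball)
    fix \<xi> t assume Phi: "Phi \<xi> = ereal t" and tK: "t \<notin> cball 0 R"
    have tR: "\<bar>t\<bar> > R" using tK by (simp add: dist_real_def)
    have c: "\<forall>j<M. \<xi> j = \<xi> 0"
    proof (rule ccontr)
      assume "\<not> (\<forall>j<M. \<xi> j = \<xi> 0)"
      then obtain j where "j < M" "\<xi> j \<noteq> \<xi> 0" by blast
      then have "\<bar>t\<bar> \<le> real M + \<bar>real_of_ereal c0\<bar>" using Phi by (rule Phi_small)
      then show False using tR unfolding R_def by simp
    qed
    obtain \<eta> where e0: "\<xi> = prepend (replicate M (\<xi> 0)) \<eta>" using const_prefix[OF c] by blast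
    have "g \<xi> = \<xi>"
    proof (cases "\<xi> 0")
      case True
      then have e: "\<xi> = prepend (replicate M True) \<eta>" using e0 by metis
      have "g (prepend (replicate M True) \<eta>) = prepend (replicate M True) \<eta>" by (rule M1) (simp add: M_def)
      then show ?thesis using e by metis
    next
      case False
      then have e: "\<xi> = prepend (replicate M False) \<eta>" using e0 by metis
      have "g (prepend (replicate M False) \<eta>) = prepend (replicate M False) \<eta>" by (rule M2) (simp add: M_def)
      then show ?thesis using e by metis
    qed
    then show "Phi (g \<xi>) = Phi \<xi>" by simp
  qed
qed

lemma Phi_rep: "Phi (prepend (replicate (Suc k) b) (\<lambda>_. \<not> b)) = ereal (if b then real k else - real k)"
  using Phi_rep_T Phi_rep_F by (cases b) simp_all

lemma compact_germ0: assumes gG: "g \<in> G0" and cs: "compact_support g" shows "germ b g 0"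
proof -
  obtain p where p: "germ b g p" using G0_germ[OF gG] by blast
  obtain M where M: "\<And>N. N \<ge> M \<Longrightarrow> int N + p \<ge> 0 \<and>
      (\<forall>\<zeta>. g (prepend (replicate N b) \<zeta>) = prepend (replicate (nat (int N + p)) b) \<zeta>)"
    using p unfolding germ_def by blast
  obtain K :: "real set" where K: "compact K"
    and Kfix: "\<And>\<xi> t. Phi \<xi> = ereal t \<Longrightarrow> t \<notin> K \<Longrightarrow> Phi (g \<xi>) = Phi \<xi>"
    using cs unfolding compact_support_def by blast
  obtain R where R: "\<And>x. x \<in> K \<Longrightarrow> \<bar>x\<bar> \<le> R"
    using compact_imp_bounded[OF K] unfolding bounded_real by blast
  define k where "k = M + nat \<bar>p\<bar> + nat \<lceil>R\<rceil> + 1"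
  have kR: "real k > R" unfolding k_def by linarith
  have kM: "Suc k \<ge> M" unfolding k_def by simp
  define k' where "k' = nat (int (Suc k) + p) - 1"
  have k'1: "nat (int (Suc k) + p) = Suc k'" unfolding k'_def k_def by linarith
  let ?\<xi> = "prepend (replicate (Suc k) b) (\<lambda>_. \<not> b)"
  have gx: "g ?\<xi> = prepend (replicate (Suc k') b) (\<lambda>_. \<not> b)" using M[OF kM] k'1 by simp
  have "(if b then real k else - real k) \<notin> K" using R kR by (cases b) force+
  then have "Phi (g ?\<xi>) = Phi ?\<xi>" using Kfix Phi_rep by blast
  then have "ereal (if b then real k' else - real k') = ereal (if b then real k else - real k)"
    using gx Phi_rep by simp
  then have "k' = k" by (cases b) simp_all
  then have "int (Suc k) + p = int (Suc k)" using k'1 M[OF kM] by linarith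
  then have "p = 0" by simp
  then show ?thesis using p by simp
qed

lemma germ_pow_nat: assumes fG: "f \<in> G0" and fp: "germ b f p"
  shows "f [^]\<^bsub>Gr\<^esub> (n::nat) \<in> G0 \<and> germ b (f [^]\<^bsub>Gr\<^esub> n) (int n * p)"
proof (induction n)
  case 0
  have e0: "f [^]\<^bsub>Gr\<^esub> (0::nat) = id" by (simp add: Sym_one)
  have i: "id \<in> G0" using subgroup.one_closed[OF G0_subgroup] Sym_one by simp
  have z: "int 0 * p = 0" by simp
  show ?case unfolding e0 z using i germ_id by blast
next
  case (Suc n)
  have c: "f [^]\<^bsub>Gr\<^esub> n \<in> G0" and gn: "germ b (f [^]\<^bsub>Gr\<^esub> n) (int n * p)" using Suc.IH by blast+
  have e: "f [^]\<^bsub>Gr\<^esub> (Suc n) = f [^]\<^bsub>Gr\<^esub> n \<circ> f"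
    by (simp only: nat_pow_Suc Gr_mult[OF c fG])
  have g: "germ b (f [^]\<^bsub>Gr\<^esub> n \<circ> f) (int n * p + p)" by (rule germ_comp[OF gn fp])
  have h: "int (Suc n) * p = int n * p + p" by (simp add: algebra_simps)
  show ?case unfolding e h using g G0_comp[OF c fG] by blast
qed

lemma germ_pow_int: assumes fG: "f \<in> G0" and fp: "germ b f p"
  shows "germ b (f [^]\<^bsub>Gr\<^esub> (k::int)) (k * p)"
proof (cases "k < 0")
  case True
  have a: "f [^]\<^bsub>Gr\<^esub> nat (- k) \<in> G0" "germ b (f [^]\<^bsub>Gr\<^esub> nat (- k)) (int (nat (- k)) * p)"
    using germ_pow_nat[OF fG fp] by blast+
  have "f [^]\<^bsub>Gr\<^esub> k = inv\<^bsub>Gr\<^esub> (f [^]\<^bsub>Gr\<^esub> nat (- k))"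
    using True int_pow_def2[of Gr f k] by (simp only: if_True)
  also have "\<dots> = finv (f [^]\<^bsub>Gr\<^esub> nat (- k))" using a(1) by (rule Gr_inv)
  finally have e: "f [^]\<^bsub>Gr\<^esub> k = finv (f [^]\<^bsub>Gr\<^esub> nat (- k))" .
  have g: "germ b (finv (f [^]\<^bsub>Gr\<^esub> nat (- k))) (- (int (nat (- k)) * p))"
    using germ_finv[OF G0_bij[OF a(1)] a(2)] .
  have h: "- (int (nat (- k)) * p) = k * p" using True by simp
  show ?thesis unfolding e using g unfolding h .
next
  case False
  have e: "f [^]\<^bsub>Gr\<^esub> k = f [^]\<^bsub>Gr\<^esub> nat k"
    using False int_pow_def2[of Gr f k] by (simp only: if_False)
  have h: "int (nat k) * p = k * p" using False by simp
  show ?thesis unfolding e using germ_pow_nat[OF fG fp, of "nat k"] unfolding h by blast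
qed



lemma x1_germ_T: "germ True (x_s [True]) 1"
  using germ_loc_rep[OF germ_xmap_T, of 1] by (simp add: x_s_def)

lemma x1_germ_F: "germ False (x_s [True]) 0"
  unfolding x_s_def by (rule germ_loc_nonpref) simp

lemma xmap_G0: "xmap \<in> G0"
  using x_s_G0[of "[]"] by (simp add: x_s_def)

lemma sup_dir: assumes gG: "g \<in> G0" and cs: "compact_support g"
  and w: "valid_word w" "word_eval w = g" "y_exponent w = 0"
  shows "g \<in> G0'"
proof -
  interpret Q: comm_group Q by (rule Q_comm)
  interpret Gr: group Gr by (rule grpGr)
  obtain i j where ij: "cls g = tri i j 0" using word_cls[OF w(1)] w(2,3) by auto
  define h where "h = xmap [^]\<^bsub>Gr\<^esub> i \<otimes>\<^bsub>Gr\<^esub> x_s [True] [^]\<^bsub>Gr\<^esub> j"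
  have aG: "xmap [^]\<^bsub>Gr\<^esub> i \<in> G0" using Gr.int_pow_closed[of xmap i] xmap_G0 by simp
  have bG: "x_s [True] [^]\<^bsub>Gr\<^esub> j \<in> G0" using Gr.int_pow_closed[of "x_s [True]" j] by simp
  have hG: "h \<in> G0" unfolding h_def Gr_mult[OF aG bG] by (rule G0_comp[OF aG bG])
  have hc: "h = xmap [^]\<^bsub>Gr\<^esub> i \<circ> x_s [True] [^]\<^bsub>Gr\<^esub> j" unfolding h_def by (rule Gr_mult[OF aG bG])
  have ph: "group_hom Gr Q cls"
    by (simp add: group_hom_def group_hom_axioms_def grpGr Q.is_group pi_hom)
  have "cls h = cls (xmap [^]\<^bsub>Gr\<^esub> i) \<otimes>\<^bsub>Q\<^esub> cls (x_s [True] [^]\<^bsub>Gr\<^esub> j)"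
    unfolding hc by (rule pi_comp[OF aG bG])
  also have "\<dots> = cA [^]\<^bsub>Q\<^esub> i \<otimes>\<^bsub>Q\<^esub> cB [^]\<^bsub>Q\<^esub> j"
    using group_hom.hom_int_pow[OF ph, of xmap i] group_hom.hom_int_pow[OF ph, of "x_s [True]" j] xmap_G0
    by (simp add: cA_def cB_def)
  also have "\<dots> = tri i j 0" using cABC_carrier by (simp add: tri_def)
  finally have "cls g = cls h" using ij by simp
  then have n: "g \<circ> finv h \<in> G0'" by (rule pi_eq_imp[OF gG hG])
  have bh: "bij h" "bij g" using hG gG G0_bij by auto
  have hh: "h = finv (g \<circ> finv h) \<circ> g"
  proof -
    have "finv (g \<circ> finv h) = finv (finv h) \<circ> finv g" using bh by (simp add: o_inv_distrib bij_finv)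
    also have "\<dots> = h \<circ> finv g" using bh by (simp add: inv_inv_eq)
    finally have "finv (g \<circ> finv h) \<circ> g = h \<circ> (finv g \<circ> g)" by (simp add: comp_assoc)
    also have "\<dots> = h" using bij_finv_comp[OF bh(2)] by simp
    finally show ?thesis by simp
  qed
  have hgerm: "germ b h 0" for b
  proof -
    have "germ b (finv (g \<circ> finv h) \<circ> g) (- 0 + 0)"
      by (rule germ_comp[OF germ_finv[OF _ N_germ[OF n]] compact_germ0[OF gG cs]])
         (use bh in \<open>simp add: bij_finv bij_comp\<close>)
    then show ?thesis using hh by simp
  qed
  have "germ True h (i * 1 + j * 1)"
    unfolding hc by (rule germ_comp[OF germ_pow_int[OF xmap_G0 germ_xmap_T] germ_pow_int[OF x_s_G0 x1_germ_T]])
  then have e1: "i + j = 0" using germ_unique[OF _ hgerm[of True]] by simp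
  have "germ False h (i * (-1) + j * 0)"
    unfolding hc by (rule germ_comp[OF germ_pow_int[OF xmap_G0 germ_xmap_F] germ_pow_int[OF x_s_G0 x1_germ_F]])
  then have "i * (-1) + j * 0 = 0" by (rule germ_unique[OF _ hgerm[of False]])
  then have e2: "i = 0" by simp
  have "h = id" unfolding h_def using e1 e2 by (simp add: Sym_one Sym_mult)
  then show ?thesis using n by simp
qed

theorem mainTheorem4:
  shows "G0' = {g \<in> G0. compact_support g \<and>
                 (\<exists>w. valid_word w \<and> word_eval w = g \<and> y_exponent w = 0)}"
proof
  show "G0' \<subseteq> {g \<in> G0. compact_support g \<and> (\<exists>w. valid_word w \<and> word_eval w = g \<and> y_exponent w = 0)}"
    using N_sub_G0 N_compact N_word by blast
  show "{g \<in> G0. compact_support g \<and> (\<exists>w. valid_word w \<and> word_eval w = g \<and> y_exponent w = 0)} \<subseteq> G0'"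
    using sup_dir by blast
qed


end
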